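(* Each of the following argument forms is not valid, i.e. in each item there exist formulas $\alpha,\beta,\delta$ for which the stated failure occurs: (1) $\alpha\nvDash\alpha\land\alpha$; (2) $\alpha\land\beta\nvDash\beta\land\alpha$; (3) $\alpha\land(\beta\land\delta)\nvDash(\alpha\land\beta)\land\delta$; (4) $(\alpha\land\beta)\land\delta\nvDash\alpha\land(\beta\land\delta)$; (5) $\alpha\land(\beta\lor\delta)\nvDash(\alpha\land\beta)\lor(\alpha\land\delta)$; (6) $(\alpha\land\beta)\lor(\alpha\land\delta)\nvDash\alpha\land(\beta\lor\delta)$; (7) it is not the case that $\delta\vDash\alpha$ and $\delta\vDash\beta$ always imply $\delta\vDash\alpha\land\beta$; (8) $\alpha\land\lnot\alpha\nvDash\beta$; (9) $\alpha\uplus\beta\nvDash\beta\uplus\alpha$; (10) $\alpha\uplus\beta\nvDash\alpha\lor\beta$, and $\alpha\uplus\beta\nvDash\lnot\alpha\lor\lnot\beta$.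
   Context: Hilbert spaces and states: for $n\ge1$, $\mathcal H^{(n)}=(\mathbb C^2)^{\otimes n}$ with canonical basis $|x_1,\dots,x_n\rangle$ ($x_i\in\{0,1\}$, $|0\rangle=(1,0)$, $|1\rangle=(0,1)$); $\mathfrak D(\mathcal H^{(n)})$ is the set of density operators (qumixes). A truth-perspective is a unitary $\mathfrak T$ on $\mathbb C^2$, $\mathfrak T^{(n)}=\mathfrak T^{\otimes n}$. $^{\mathfrak T}P_1^{(n)}$ (resp. $^{\mathfrak T}P_0^{(n)}$) is the projection onto the span of the $\mathfrak T^{(n)}|x_1,\dots,x_n\rangle$ with $x_n=1$ (resp. $0$). $\mathtt p_{\mathfrak T}(\rho)=\mathrm{tr}(^{\mathfrak T}P_1^{(n)}\rho)$, and $\rho\preceq_{\mathfrak T}\sigma$ iff $\mathtt p_{\mathfrak T}(\rho)\le\mathtt p_{\mathfrak T}(\sigma)$. $Red^{(j_1,\dots,j_s)}_{[n_1,\dots,n_t]}(\rho)$ is the reduced state of $\rho$ on factors $j_1,\dots,j_s$ of $\mathcal H^{(n_1)}\otimes\cdots\otimes\mathcal H^{(n_t)}$. Gates (canonical basis, extended linearly): $\mathtt{NOT}^{(n)}|x_1..x_n\rangle=|x_1..x_{n-1}\rangle\otimes|1-x_n\rangle$; $\sqrt{\mathtt I}^{(n)}|x_1..x_n\rangle=|x_1..x_{n-1}\rangle\otimes\frac1{\sqrt2}((-1)^{x_n}|x_n\rangle+|1-x_n\rangle)$; $\sqrt{\mathtt{NOT}}^{(n)}|x_1..x_n\rangle=|x_1..x_{n-1}\rangle\otimes(\frac{1-i}2|x_n\rangle+\frac{1+i}2|1-x_n\rangle)$;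 $\mathtt{XOR}^{(m,n)}|x_1..x_m,y_1..y_n\rangle=|x_1..x_m,y_1..y_{n-1}\rangle\otimes|x_m\oplus y_n\rangle$; $\mathtt T^{(m,n,p)}|x_1..x_m,y_1..y_n,z_1..z_p\rangle=|x_1..x_m,y_1..y_n,z_1..z_{p-1}\rangle\otimes|x_my_n\oplus z_p\rangle$ ($\oplus$ addition mod 2). For a gate $G$ on $\mathcal H^{(n)}$: $G_{\mathfrak T}=\mathfrak T^{(n)}G\mathfrak T^{(n)\dagger}$, $^{\mathfrak D}G_{\mathfrak T}(\rho)=G_{\mathfrak T}\rho G_{\mathfrak T}^\dagger$. Language: formulas built from atomic formulas (including distinguished atoms $\mathbf t,\mathbf f$) with unary $\lnot,\sqrt{id},\sqrt\lnot$, binary $\uplus$, ternary $\intercal$; $\alpha\land\beta:=\intercal(\alpha,\beta,\mathbf f)$, $\alpha\lor\beta:=\lnot(\lnot\alpha\land\lnot\beta)$. $At(\alpha)$ = number of occurrences of atomic formulas in $\alpha$. Syntactical tree: $Level_1^\alpha=(\alpha)$; $Level_{i+1}^\alpha$ is obtained from $Level_i^\alpha=(\beta_1,\dots,\beta_r)$ by replacing each non-atomic $\beta_j$ by its immediate subformulas (arguments, in order) and keeping atomic $\beta_j$; the last level $Level_h^\alpha$ lists all atomic occurrences. $\mathcal H^{(At\alpha)}=\bigotimes_j\mathcal H^{(At\beta_j)}$. The $\mathfrak T$-gate $G^\alpha_{\mathfrak T(i)}$ ($1\le i<h$) is the tensor product over $j$ of: identity of $\mathbb C^2$ if $\beta_j$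 atomic; $\mathtt{NOT}_{\mathfrak T}^{(At\beta)}$, $\sqrt{\mathtt I}_{\mathfrak T}^{(At\beta)}$, $\sqrt{\mathtt{NOT}}_{\mathfrak T}^{(At\beta)}$ for $\lnot\beta,\sqrt{id}\beta,\sqrt\lnot\beta$; $\mathtt{XOR}_{\mathfrak T}^{(At\beta',At\beta'')}$ for $\beta'\uplus\beta''$; $\mathtt T_{\mathfrak T}^{(At\beta',At\beta'',At\beta''')}$ for $\intercal(\beta',\beta'',\beta''')$. Holistic model: a map $\mathtt{Hol}_{\mathfrak T}$ assigning to each level $Level_i^\alpha$ of each formula $\alpha$ a qumix in $\mathfrak D(\mathcal H^{(At\alpha)})$ such that (a) $\mathtt{Hol}_{\mathfrak T}(Level_i^\alpha)={}^{\mathfrak D}G^\alpha_{\mathfrak T(i)}(\mathtt{Hol}_{\mathfrak T}(Level_{i+1}^\alpha))$ for $1\le i<h$; (b) (normality) for each $\gamma$, with the contextual meaning of the occurrence $\beta_j$ in $Level_i^\gamma=(\beta_1,\dots,\beta_r)$ defined as $Red^{(j)}_{[At\beta_1,\dots,At\beta_r]}(\mathtt{Hol}_{\mathfrak T}(Level_i^\gamma))$, all occurrences of the same subformula $\beta$ in the tree of $\gamma$ have the same contextual meaning, denoted $\mathtt{Hol}^\gamma_{\mathfrak T}(\beta)$; (c) every occurrence of $\mathbf f$ (resp. $\mathbf t$) has contextual meaning $^{\mathfrak T}P_0^{(1)}$ (resp. $^{\mathfrak T}P_1^{(1)}$). Logical consequence: $\alpha\vDash\beta$ iff for every truth-perspective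 $\mathfrak T$, every formula $\gamma$ having both $\alpha$ and $\beta$ as subformulas (a formula counts as a subformula of itself), and every holistic model $\mathtt{Hol}_{\mathfrak T}$, $\mathtt{Hol}^\gamma_{\mathfrak T}(\alpha)\preceq_{\mathfrak T}\mathtt{Hol}^\gamma_{\mathfrak T}(\beta)$; $\alpha\nvDash\beta$ means that $\alpha\vDash\beta$ fails. *)

theory Defs
  imports Complex_Main
begin

text \<open>Formulas: atomic formulas (propositional variables plus the distinguished
atoms t and f), unary connectives not, sqrt-id, sqrt-not, binary XOR, ternary Toffoli.\<close>

datatype form = Atom nat | Tr | Fa | Neg form | SqId form | SqNeg form
  | Xor form form | Tof form form form

definition Conj :: "form \<Rightarrow> form \<Rightarrow> form" where
  "Conj a b = Tof a b Fa"

definition Disj :: "form \<Rightarrow> form \<Rightarrow> form" where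
  "Disj a b = Neg (Conj (Neg a) (Neg b))"

fun is_atomic :: "form \<Rightarrow> bool" where
  "is_atomic (Atom _) = True"
| "is_atomic Tr = True"
| "is_atomic Fa = True"
| "is_atomic _ = False"

fun At :: "form \<Rightarrow> nat" where
  "At (Neg a) = At a"
| "At (SqId a) = At a"
| "At (SqNeg a) = At a"
| "At (Xor a b) = At a + At b"
| "At (Tof a b c) = At a + At b + At c"
| "At _ = 1"

fun expand :: "form \<Rightarrow> form list" where
  "expand (Neg a) = [a]"
| "expand (SqId a) = [a]"
| "expand (SqNeg a) = [a]"
| "expand (Xor a b) = [a, b]"
| "expand (Tof a b c) = [a, b, c]"
| "expand a = [a]"

definition next_level :: "form list \<Rightarrow> form list" where
  "next_level l = concat (map expand l)"

text \<open>Level i (for i \<ge> 1) of the syntactical tree of a formula.\<close>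
definition level :: "form \<Rightarrow> nat \<Rightarrow> form list" where
  "level a i = (next_level ^^ (i - 1)) [a]"

text \<open>Height h: the index of the last level (the one listing only atomic occurrences).\<close>
fun height :: "form \<Rightarrow> nat" where
  "height (Neg a) = Suc (height a)"
| "height (SqId a) = Suc (height a)"
| "height (SqNeg a) = Suc (height a)"
| "height (Xor a b) = Suc (max (height a) (height b))"
| "height (Tof a b c) = Suc (max (height a) (max (height b) (height c)))"
| "height _ = 1"

text \<open>An operator on H^(n) is given by its matrix in the canonical basis
|x_1,...,x_n>, indexed by bit lists of length n (False = 0, True = 1);
entry A x y = <x|A|y>. Values outside bit lists of length n are irrelevant.\<close>

type_synonym qop = "bool list \<Rightarrow> bool list \<Rightarrow> complex"
type_synonym qubit_op = "bool \<Rightarrow> bool \<Rightarrow> complex"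

definition bits :: "nat \<Rightarrow> bool list set" where
  "bits n = {xs. length xs = n}"

definition op_eq :: "nat \<Rightarrow> qop \<Rightarrow> qop \<Rightarrow> bool" where
  "op_eq n A B \<longleftrightarrow> (\<forall>x\<in>bits n. \<forall>y\<in>bits n. A x y = B x y)"

definition op_mult :: "nat \<Rightarrow> qop \<Rightarrow> qop \<Rightarrow> qop" where
  "op_mult n A B = (\<lambda>x y. \<Sum>z\<in>bits n. A x z * B z y)"

definition op_adj :: "qop \<Rightarrow> qop" where
  "op_adj A = (\<lambda>x y. cnj (A y x))"

definition op_trace :: "nat \<Rightarrow> qop \<Rightarrow> complex" where
  "op_trace n A = (\<Sum>x\<in>bits n. A x x)"

definition op_id :: qop where
  "op_id = (\<lambda>x y. if x = y then 1 else 0)"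

definition op_tensor :: "nat \<Rightarrow> qop \<Rightarrow> qop \<Rightarrow> qop" where
  "op_tensor m A B = (\<lambda>x y. A (take m x) (take m y) * B (drop m x) (drop m y))"

fun op_tensor_list :: "(nat \<times> qop) list \<Rightarrow> qop" where
  "op_tensor_list [] = op_id"
| "op_tensor_list ((m, A) # r) = op_tensor m A (op_tensor_list r)"

definition density :: "nat \<Rightarrow> qop \<Rightarrow> bool" where
  "density n \<rho> \<longleftrightarrow>
     (\<forall>x\<in>bits n. \<forall>y\<in>bits n. \<rho> x y = cnj (\<rho> y x)) \<and>
     (\<forall>v :: bool list \<Rightarrow> complex.
        Im (\<Sum>x\<in>bits n. \<Sum>y\<in>bits n. cnj (v x) * \<rho> x y * v y) = 0 \<and>
        Re (\<Sum>x\<in>bits n. \<Sum>y\<in>bits n. cnj (v x) * \<rho> x y * v y) \<ge> 0) \<and>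
     op_trace n \<rho> = 1"

definition unitary2 :: "qubit_op \<Rightarrow> bool" where
  "unitary2 U \<longleftrightarrow> (\<forall>x y. (\<Sum>z\<in>UNIV. cnj (U z x) * U z y) = (if x = y then 1 else 0))"

definition tp_power :: "qubit_op \<Rightarrow> qop" where
  "tp_power U = (\<lambda>x y. if length x = length y then (\<Prod>i<length x. U (x ! i) (y ! i)) else 0)"

definition conj_gate :: "nat \<Rightarrow> qubit_op \<Rightarrow> qop \<Rightarrow> qop" where
  "conj_gate n U G = op_mult n (op_mult n (tp_power U) G) (op_adj (tp_power U))"

definition apply_op :: "nat \<Rightarrow> qop \<Rightarrow> qop \<Rightarrow> qop" where
  "apply_op n G \<rho> = op_mult n (op_mult n G \<rho>) (op_adj G)"

definition perm_op :: "(bool list \<Rightarrow> bool list) \<Rightarrow> qop" where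
  "perm_op f = (\<lambda>x y. if x = f y then 1 else 0)"

definition NOT_gate :: qop where
  "NOT_gate = perm_op (\<lambda>y. butlast y @ [\<not> last y])"

definition sqrtI_gate :: qop where
  "sqrtI_gate = (\<lambda>x y. if butlast x = butlast y then
       (if last x = last y then (if last y then -1 else 1) / complex_of_real (sqrt 2)
        else 1 / complex_of_real (sqrt 2))
     else 0)"

definition sqrtNOT_gate :: qop where
  "sqrtNOT_gate = (\<lambda>x y. if butlast x = butlast y then
       (if last x = last y then (1 - \<i>) / 2 else (1 + \<i>) / 2)
     else 0)"

definition XOR_gate :: "nat \<Rightarrow> qop" where
  "XOR_gate m = perm_op (\<lambda>y. take m y @ butlast (drop m y)
       @ [last (take m y) \<noteq> last (drop m y)])"

definition Toffoli_gate :: "nat \<Rightarrow> nat \<Rightarrow> qop" where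
  "Toffoli_gate m k = perm_op (\<lambda>y. take m y @ take k (drop m y) @ butlast (drop (m + k) y)
       @ [(last (take m y) \<and> last (take k (drop m y))) \<noteq> last (drop (m + k) y)])"

fun node_gate :: "qubit_op \<Rightarrow> form \<Rightarrow> qop" where
  "node_gate U (Neg a) = conj_gate (At a) U NOT_gate"
| "node_gate U (SqId a) = conj_gate (At a) U sqrtI_gate"
| "node_gate U (SqNeg a) = conj_gate (At a) U sqrtNOT_gate"
| "node_gate U (Xor a b) = conj_gate (At a + At b) U (XOR_gate (At a))"
| "node_gate U (Tof a b c) = conj_gate (At a + At b + At c) U (Toffoli_gate (At a) (At b))"
| "node_gate U _ = op_id"

definition level_gate :: "qubit_op \<Rightarrow> form list \<Rightarrow> qop" where
  "level_gate U l = op_tensor_list (map (\<lambda>b. (At b, node_gate U b)) l)"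

definition proj1 :: "nat \<Rightarrow> qubit_op \<Rightarrow> qop" where
  "proj1 n U = (\<lambda>x y. \<Sum>z\<in>{z\<in>bits n. last z}. tp_power U x z * cnj (tp_power U y z))"

definition proj0 :: "nat \<Rightarrow> qubit_op \<Rightarrow> qop" where
  "proj0 n U = (\<lambda>x y. \<Sum>z\<in>{z\<in>bits n. \<not> last z}. tp_power U x z * cnj (tp_power U y z))"

definition prob :: "nat \<Rightarrow> qubit_op \<Rightarrow> qop \<Rightarrow> real" where
  "prob n U \<rho> = Re (op_trace n (op_mult n (proj1 n U) \<rho>))"

text \<open>Reduced state on the factor with (0-based) index j of
H^(n_1) \<otimes> ... \<otimes> H^(n_r), dims = [n_1,...,n_r].\<close>
definition red :: "nat list \<Rightarrow> nat \<Rightarrow> qop \<Rightarrow> qop" where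
  "red dims j \<rho> = (\<lambda>x y. \<Sum>z\<in>bits (sum_list (take j dims)).
       \<Sum>w\<in>bits (sum_list (drop (Suc j) dims)). \<rho> (z @ x @ w) (z @ y @ w))"

text \<open>A holistic model assigns to each formula gamma and level index i a qumix
Hol gamma i (only 1 \<le> i \<le> height gamma is relevant).\<close>

text \<open>Occurrence (i, j) of beta in the tree of gamma: level i, position j (0-based).\<close>
definition occ :: "form \<Rightarrow> form \<Rightarrow> nat \<times> nat \<Rightarrow> bool" where
  "occ \<gamma> \<beta> p \<longleftrightarrow> 1 \<le> fst p \<and> fst p \<le> height \<gamma> \<and> snd p < length (level \<gamma> (fst p))
      \<and> level \<gamma> (fst p) ! snd p = \<beta>"

definition ctx :: "(form \<Rightarrow> nat \<Rightarrow> qop) \<Rightarrow> form \<Rightarrow> nat \<times> nat \<Rightarrow> qop" where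
  "ctx Hol \<gamma> p = red (map At (level \<gamma> (fst p))) (snd p) (Hol \<gamma> (fst p))"

definition holistic_model :: "qubit_op \<Rightarrow> (form \<Rightarrow> nat \<Rightarrow> qop) \<Rightarrow> bool" where
  "holistic_model U Hol \<longleftrightarrow>
     (\<forall>\<gamma> i. 1 \<le> i \<and> i \<le> height \<gamma> \<longrightarrow> density (At \<gamma>) (Hol \<gamma> i)) \<and>
     (\<forall>\<gamma> i. 1 \<le> i \<and> i < height \<gamma> \<longrightarrow>
        op_eq (At \<gamma>) (Hol \<gamma> i)
          (apply_op (At \<gamma>) (level_gate U (level \<gamma> i)) (Hol \<gamma> (Suc i)))) \<and>
     (\<forall>\<gamma> \<beta> p q. occ \<gamma> \<beta> p \<and> occ \<gamma> \<beta> q \<longrightarrow> op_eq (At \<beta>) (ctx Hol \<gamma> p) (ctx Hol \<gamma> q)) \<and>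
     (\<forall>\<gamma> p. occ \<gamma> Fa p \<longrightarrow> op_eq 1 (ctx Hol \<gamma> p) (proj0 1 U)) \<and>
     (\<forall>\<gamma> p. occ \<gamma> Tr p \<longrightarrow> op_eq 1 (ctx Hol \<gamma> p) (proj1 1 U))"

definition subformula :: "form \<Rightarrow> form \<Rightarrow> bool" where
  "subformula \<beta> \<gamma> \<longleftrightarrow> (\<exists>p. occ \<gamma> \<beta> p)"

text \<open>Hol^gamma_T(beta): the (common) contextual meaning of the occurrences of beta.\<close>
definition hol_mean :: "(form \<Rightarrow> nat \<Rightarrow> qop) \<Rightarrow> form \<Rightarrow> form \<Rightarrow> qop" where
  "hol_mean Hol \<gamma> \<beta> = ctx Hol \<gamma> (SOME p. occ \<gamma> \<beta> p)"

definition entails :: "form \<Rightarrow> form \<Rightarrow> bool" where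
  "entails \<alpha> \<beta> \<longleftrightarrow>
     (\<forall>U \<gamma> Hol. unitary2 U \<longrightarrow> subformula \<alpha> \<gamma> \<longrightarrow> subformula \<beta> \<gamma> \<longrightarrow>
        holistic_model U Hol \<longrightarrow>
        prob (At \<alpha>) U (hol_mean Hol \<gamma> \<alpha>) \<le> prob (At \<beta>) U (hol_mean Hol \<gamma> \<beta>))"

end

theory Submission
  imports Defs
begin

lemma bits_iff[simp]: "x \<in> bits n \<longleftrightarrow> length x = n" by (simp add: bits_def)

lemma finite_bits[simp]: "finite (bits n)"
proof -
  have "bits n = {xs. set xs \<subseteq> (UNIV::bool set) \<and> length xs = n}" by (auto simp: bits_def)
  thus ?thesis using finite_lists_length_eq[of "UNIV::bool set" n] by simp
qed

lemma bits_add_image: "bits (m+k) = (\<lambda>(y,z). y @ z) ` (bits m \<times> bits k)"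
proof (rule set_eqI, rule iffI)
  fix x assume "x \<in> bits (m+k)"
  then show "x \<in> (\<lambda>(y,z). y @ z) ` (bits m \<times> bits k)"
    by (auto intro!: image_eqI[where x="(take m x, drop m x)"])
qed auto

lemma sum_bits_add: "(\<Sum>x\<in>bits (m+k). f x) = (\<Sum>y\<in>bits m. \<Sum>z\<in>bits k. f (y @ z))"
proof -
  have inj: "inj_on (\<lambda>(y,z). y @ z) (bits m \<times> bits k)"
    by (auto simp: inj_on_def)
  have "(\<Sum>x\<in>bits (m+k). f x) = (\<Sum>p\<in>bits m \<times> bits k. f ((\<lambda>(y,z). y @ z) p))"
    unfolding bits_add_image by (rule sum.reindex[OF inj, unfolded comp_def])
  also have "\<dots> = (\<Sum>y\<in>bits m. \<Sum>z\<in>bits k. f (y @ z))"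
    by (simp add: sum.cartesian_product split_def)
  finally show ?thesis .
qed

lemma bits_0: "bits 0 = {[]}" by (auto simp: bits_def)
lemma bits_1: "bits 1 = {[False],[True]}"
  by (auto simp: bits_def length_Suc_conv)

lemma sum_bits_1: "(\<Sum>x\<in>bits 1. f x) = f [False] + f [True]"
  by (simp add: bits_1[simplified])

lemma sum_bits_3: "(\<Sum>u\<in>bits (a+n+b). f u) = (\<Sum>u1\<in>bits a. \<Sum>u2\<in>bits n. \<Sum>u3\<in>bits b. f (u1 @ u2 @ u3))"
  by (simp add: sum_bits_add sum.distrib)

definition unit :: "nat \<Rightarrow> qop \<Rightarrow> bool" where
  "unit n G \<longleftrightarrow> (\<forall>u\<in>bits n. \<forall>v\<in>bits n. (\<Sum>x\<in>bits n. cnj (G x u) * G x v) = (if u = v then 1 else 0))"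

lemma unit_cong: "op_eq n G G' \<Longrightarrow> unit n G \<Longrightarrow> unit n G'"
  unfolding unit_def op_eq_def by simp

lemma unit_perm: assumes "\<And>y. y \<in> bits n \<Longrightarrow> f y \<in> bits n" "inj_on f (bits n)"
  shows "unit n (perm_op f)"
  unfolding unit_def perm_op_def
proof (intro ballI)
  fix u v assume u: "u \<in> bits n" and v: "v \<in> bits n"
  have "(\<Sum>x\<in>bits n. cnj (if x = f u then 1 else 0) * (if x = f v then 1 else 0 :: complex))
      = (\<Sum>x\<in>bits n. if x = f u then (if f u = f v then 1 else 0) else 0)"
    by (rule sum.cong) auto
  also have "\<dots> = (if f u = f v then 1 else 0)" using assms(1)[OF u] by simp
  also have "\<dots> = (if u = v then 1 else 0)" using assms(2) u v by (auto dest: inj_onD)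
  finally show "(\<Sum>x\<in>bits n. cnj (if x = f u then 1 else 0) * (if x = f v then 1 else 0 :: complex)) = (if u = v then 1 else 0)" .
qed

lemma unit_id: "unit n op_id"
  unfolding unit_def op_id_def
proof (intro ballI)
  fix u v assume u: "u \<in> bits n" and v: "v \<in> bits n"
  have "(\<Sum>x\<in>bits n. cnj (if x = u then 1 else 0) * (if x = v then 1 else 0 :: complex))
      = (\<Sum>x\<in>bits n. if x = u then (if u = v then 1 else 0) else 0)"
    by (rule sum.cong) auto
  also have "\<dots> = (if u = v then 1 else 0)" using u by simp
  finally show "(\<Sum>x\<in>bits n. cnj (if x = u then 1 else 0) * (if x = v then 1 else 0 :: complex)) = (if u = v then 1 else 0)" .
qed

lemma unit_tensor: assumes A: "unit m A" and B: "unit k B" shows "unit (m+k) (op_tensor m A B)"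
  unfolding unit_def
proof (intro ballI)
  fix u v assume u: "u \<in> bits (m+k)" and v: "v \<in> bits (m+k)"
  have "(\<Sum>x\<in>bits (m+k). cnj (op_tensor m A B x u) * op_tensor m A B x v)
     = (\<Sum>y\<in>bits m. \<Sum>z\<in>bits k. (cnj (A y (take m u)) * A y (take m v)) * (cnj (B z (drop m u)) * B z (drop m v)))"
    unfolding sum_bits_add op_tensor_def
    by (intro sum.cong refl) (simp add: algebra_simps)
  also have "\<dots> = (\<Sum>y\<in>bits m. cnj (A y (take m u)) * A y (take m v)) * (\<Sum>z\<in>bits k. cnj (B z (drop m u)) * B z (drop m v))"
    by (simp add: sum_product)
  also have "\<dots> = (if take m u = take m v then 1 else 0) * (if drop m u = drop m v then 1 else 0)"
    using A B u v unfolding unit_def by simp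
  also have "\<dots> = (if u = v then 1 else 0)"
    by (auto, metis append_take_drop_id)
  finally show "(\<Sum>x\<in>bits (m+k). cnj (op_tensor m A B x u) * op_tensor m A B x v) = (if u = v then 1 else 0)" .
qed

lemma apply_op_eq: "apply_op n G \<rho> x y = (\<Sum>z\<in>bits n. \<Sum>w\<in>bits n. G x w * \<rho> w z * cnj (G y z))"
  unfolding apply_op_def op_mult_def op_adj_def by (simp add: sum_distrib_right)

lemma apply_op_cong: "op_eq n \<rho> \<rho>' \<Longrightarrow> apply_op n G \<rho> = apply_op n G \<rho>'"
  unfolding op_eq_def by (intro ext) (simp add: apply_op_eq)

lemma apply_op_congG: "op_eq n G G' \<Longrightarrow> op_eq n (apply_op n G \<rho>) (apply_op n G' \<rho>)"
  unfolding op_eq_def by (simp add: apply_op_eq)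

lemma op_eq_refl[simp]: "op_eq n A A" by (simp add: op_eq_def)
lemma op_eq_sym: "op_eq n A B \<Longrightarrow> op_eq n B A" by (simp add: op_eq_def)
lemma op_eq_trans: "op_eq n A B \<Longrightarrow> op_eq n B C \<Longrightarrow> op_eq n A C" by (simp add: op_eq_def)

lemma density_cong: "op_eq n \<rho> \<rho>' \<Longrightarrow> density n \<rho> \<Longrightarrow> density n \<rho>'"
proof -
  assume e: "op_eq n \<rho> \<rho>'" and d: "density n \<rho>"
  have s: "\<And>v. (\<Sum>x\<in>bits n. \<Sum>y\<in>bits n. cnj (v x) * \<rho> x y * v y) = (\<Sum>x\<in>bits n. \<Sum>y\<in>bits n. cnj (v x) * \<rho>' x y * v y)"
    using e unfolding op_eq_def by (intro sum.cong refl) simp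
  have t: "op_trace n \<rho> = op_trace n \<rho>'" using e unfolding op_eq_def op_trace_def by (intro sum.cong) auto
  show ?thesis using d e s t unfolding density_def op_eq_def by metis
qed

lemma density_apply:
  assumes u: "unit n G" and d: "density n \<rho>"
  shows "density n (apply_op n G \<rho>)"
proof -
  have herm: "\<And>x y. x \<in> bits n \<Longrightarrow> y \<in> bits n \<Longrightarrow> \<rho> x y = cnj (\<rho> y x)"
    using d unfolding density_def by blast
  have herm': "\<And>x y. x \<in> bits n \<Longrightarrow> y \<in> bits n \<Longrightarrow> cnj (\<rho> x y) = \<rho> y x"
    using herm by (metis complex_cnj_cnj)
  have psd: "\<And>v. Im (\<Sum>x\<in>bits n. \<Sum>y\<in>bits n. cnj (v x) * \<rho> x y * v y) = 0 \<and>
        Re (\<Sum>x\<in>bits n. \<Sum>y\<in>bits n. cnj (v x) * \<rho> x y * v y) \<ge> 0"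
    using d unfolding density_def by blast
  have tr: "op_trace n \<rho> = 1" using d unfolding density_def by blast
  have H: "\<forall>x\<in>bits n. \<forall>y\<in>bits n. apply_op n G \<rho> x y = cnj (apply_op n G \<rho> y x)"
  proof (intro ballI)
    fix x y assume x: "x \<in> bits n" and y: "y \<in> bits n"
    have "cnj (apply_op n G \<rho> y x) = (\<Sum>z\<in>bits n. \<Sum>w\<in>bits n. cnj (G y w) * cnj (\<rho> w z) * G x z)"
      by (simp only: apply_op_eq cnj_sum complex_cnj_mult complex_cnj_cnj)
    also have "\<dots> = (\<Sum>z\<in>bits n. \<Sum>w\<in>bits n. cnj (G y w) * \<rho> z w * G x z)"
      by (intro sum.cong refl) (simp add: herm')
    also have "\<dots> = (\<Sum>w\<in>bits n. \<Sum>z\<in>bits n. cnj (G y w) * \<rho> z w * G x z)"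
      by (rule sum.swap)
    also have "\<dots> = apply_op n G \<rho> x y"
      unfolding apply_op_eq by (rule sum.cong[OF refl], rule sum.cong[OF refl]) (simp add: mult_ac)
    finally show "apply_op n G \<rho> x y = cnj (apply_op n G \<rho> y x)" by simp
  qed
  have Q: "(\<Sum>x\<in>bits n. \<Sum>y\<in>bits n. cnj (v x) * apply_op n G \<rho> x y * v y)
      = (\<Sum>w\<in>bits n. \<Sum>z\<in>bits n. cnj (\<Sum>x\<in>bits n. cnj (G x w) * v x) * \<rho> w z * (\<Sum>y\<in>bits n. cnj (G y z) * v y))" for v
  proof -
    have e1: "cnj (v x) * apply_op n G \<rho> x y * v y = (\<Sum>z\<in>bits n. \<Sum>w\<in>bits n. cnj (v x) * G x w * \<rho> w z * cnj (G y z) * v y)" for x y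
      by (simp only: apply_op_eq sum_distrib_left sum_distrib_right mult.assoc)
    have e2: "cnj (\<Sum>x\<in>bits n. cnj (G x w) * v x) * \<rho> w z * (\<Sum>y\<in>bits n. cnj (G y z) * v y)
        = (\<Sum>x\<in>bits n. \<Sum>y\<in>bits n. cnj (v x) * G x w * \<rho> w z * cnj (G y z) * v y)" for w z
    proof -
      have "cnj (\<Sum>x\<in>bits n. cnj (G x w) * v x) = (\<Sum>x\<in>bits n. G x w * cnj (v x))"
        by (simp add: cnj_sum)
      hence "cnj (\<Sum>x\<in>bits n. cnj (G x w) * v x) * \<rho> w z * (\<Sum>y\<in>bits n. cnj (G y z) * v y)
          = (\<Sum>x\<in>bits n. \<Sum>y\<in>bits n. (G x w * cnj (v x)) * \<rho> w z * (cnj (G y z) * v y))"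
        by (simp only: sum_distrib_right, simp only: sum_distrib_left)
      also have "\<dots> = (\<Sum>x\<in>bits n. \<Sum>y\<in>bits n. cnj (v x) * G x w * \<rho> w z * cnj (G y z) * v y)"
        by (intro sum.cong refl) (simp add: mult_ac)
      finally show ?thesis .
    qed
    have "(\<Sum>x\<in>bits n. \<Sum>y\<in>bits n. cnj (v x) * apply_op n G \<rho> x y * v y)
        = (\<Sum>x\<in>bits n. \<Sum>y\<in>bits n. \<Sum>z\<in>bits n. \<Sum>w\<in>bits n. cnj (v x) * G x w * \<rho> w z * cnj (G y z) * v y)"
      by (simp only: e1)
    also have "\<dots> = (\<Sum>x\<in>bits n. \<Sum>z\<in>bits n. \<Sum>w\<in>bits n. \<Sum>y\<in>bits n. cnj (v x) * G x w * \<rho> w z * cnj (G y z) * v y)"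
    proof (rule sum.cong[OF refl])
      fix x
      have "(\<Sum>y\<in>bits n. \<Sum>z\<in>bits n. \<Sum>w\<in>bits n. cnj (v x) * G x w * \<rho> w z * cnj (G y z) * v y)
         = (\<Sum>z\<in>bits n. \<Sum>y\<in>bits n. \<Sum>w\<in>bits n. cnj (v x) * G x w * \<rho> w z * cnj (G y z) * v y)"
        by (rule sum.swap)
      also have "\<dots> = (\<Sum>z\<in>bits n. \<Sum>w\<in>bits n. \<Sum>y\<in>bits n. cnj (v x) * G x w * \<rho> w z * cnj (G y z) * v y)"
        by (rule sum.cong[OF refl]) (rule sum.swap)
      finally show "(\<Sum>y\<in>bits n. \<Sum>z\<in>bits n. \<Sum>w\<in>bits n. cnj (v x) * G x w * \<rho> w z * cnj (G y z) * v y)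
         = (\<Sum>z\<in>bits n. \<Sum>w\<in>bits n. \<Sum>y\<in>bits n. cnj (v x) * G x w * \<rho> w z * cnj (G y z) * v y)" .
    qed
    also have "\<dots> = (\<Sum>z\<in>bits n. \<Sum>x\<in>bits n. \<Sum>w\<in>bits n. \<Sum>y\<in>bits n. cnj (v x) * G x w * \<rho> w z * cnj (G y z) * v y)"
      by (rule sum.swap)
    also have "\<dots> = (\<Sum>z\<in>bits n. \<Sum>w\<in>bits n. \<Sum>x\<in>bits n. \<Sum>y\<in>bits n. cnj (v x) * G x w * \<rho> w z * cnj (G y z) * v y)"
      by (rule sum.cong[OF refl]) (rule sum.swap)
    also have "\<dots> = (\<Sum>w\<in>bits n. \<Sum>z\<in>bits n. \<Sum>x\<in>bits n. \<Sum>y\<in>bits n. cnj (v x) * G x w * \<rho> w z * cnj (G y z) * v y)"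
      by (rule sum.swap)
    also have "\<dots> = (\<Sum>w\<in>bits n. \<Sum>z\<in>bits n. cnj (\<Sum>x\<in>bits n. cnj (G x w) * v x) * \<rho> w z * (\<Sum>y\<in>bits n. cnj (G y z) * v y))"
      by (simp only: e2)
    finally show ?thesis .
  qed
  have P: "\<forall>v. Im (\<Sum>x\<in>bits n. \<Sum>y\<in>bits n. cnj (v x) * apply_op n G \<rho> x y * v y) = 0 \<and>
        Re (\<Sum>x\<in>bits n. \<Sum>y\<in>bits n. cnj (v x) * apply_op n G \<rho> x y * v y) \<ge> 0"
  proof
    fix v
    show "Im (\<Sum>x\<in>bits n. \<Sum>y\<in>bits n. cnj (v x) * apply_op n G \<rho> x y * v y) = 0 \<and>
        Re (\<Sum>x\<in>bits n. \<Sum>y\<in>bits n. cnj (v x) * apply_op n G \<rho> x y * v y) \<ge> 0"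
      unfolding Q using psd[of "\<lambda>w. \<Sum>x\<in>bits n. cnj (G x w) * v x"] by simp
  qed
  have T: "op_trace n (apply_op n G \<rho>) = 1"
  proof -
    have "op_trace n (apply_op n G \<rho>) = (\<Sum>x\<in>bits n. \<Sum>z\<in>bits n. \<Sum>w\<in>bits n. G x w * \<rho> w z * cnj (G x z))"
      by (simp add: op_trace_def apply_op_eq)
    also have "\<dots> = (\<Sum>z\<in>bits n. \<Sum>x\<in>bits n. \<Sum>w\<in>bits n. G x w * \<rho> w z * cnj (G x z))"
      by (rule sum.swap)
    also have "\<dots> = (\<Sum>z\<in>bits n. \<Sum>w\<in>bits n. \<Sum>x\<in>bits n. G x w * \<rho> w z * cnj (G x z))"
      by (rule sum.cong[OF refl]) (rule sum.swap)
    also have "\<dots> = (\<Sum>z\<in>bits n. \<Sum>w\<in>bits n. \<rho> w z * cnj (\<Sum>x\<in>bits n. cnj (G x w) * G x z))"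
    proof (rule sum.cong[OF refl], rule sum.cong[OF refl])
      fix z w
      have "\<rho> w z * cnj (\<Sum>x\<in>bits n. cnj (G x w) * G x z) = (\<Sum>x\<in>bits n. \<rho> w z * (G x w * cnj (G x z)))"
        by (simp only: cnj_sum complex_cnj_mult complex_cnj_cnj sum_distrib_left)
      also have "\<dots> = (\<Sum>x\<in>bits n. G x w * \<rho> w z * cnj (G x z))"
        by (rule sum.cong[OF refl]) (simp add: mult_ac)
      finally show "(\<Sum>x\<in>bits n. G x w * \<rho> w z * cnj (G x z)) = \<rho> w z * cnj (\<Sum>x\<in>bits n. cnj (G x w) * G x z)" by simp
    qed
    also have "\<dots> = (\<Sum>z\<in>bits n. \<Sum>w\<in>bits n. \<rho> w z * (if w = z then 1 else 0))"
      using u unfolding unit_def by (intro sum.cong refl) simp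
    also have "\<dots> = (\<Sum>z\<in>bits n. \<rho> z z)"
      by (intro sum.cong refl) (simp add: if_distrib cong: if_cong)
    also have "\<dots> = 1" using tr by (simp add: op_trace_def)
    finally show ?thesis .
  qed
  show ?thesis unfolding density_def using H P T by blast
qed

definition Iu :: qubit_op where "Iu = (\<lambda>a b. if a = b then 1 else 0)"

lemma unitary_Iu: "unitary2 Iu"
  unfolding unitary2_def Iu_def by (auto simp: UNIV_bool)

lemma prod_ind: fixes n :: nat shows "(\<Prod>i<n. if P i then 1 else (0::complex)) = (if \<forall>i<n. P i then 1 else 0)"
  by (induction n) (auto simp: less_Suc_eq)

lemma tp_Iu: "length x = length y \<Longrightarrow> tp_power Iu x y = (if x = y then 1 else 0)"
  unfolding tp_power_def Iu_def by (simp add: prod_ind list_eq_iff_nth_eq)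

lemma if10_mult[simp]: "(if P then 1 else 0) * (a::complex) = (if P then a else 0)" by simp
lemma mult_if10[simp]: "(a::complex) * (if P then 1 else 0) = (if P then a else 0)" by simp

lemma conj_gate_Iu: "op_eq n (conj_gate n Iu G) G"
  unfolding op_eq_def
proof (intro ballI)
  fix x y assume x: "x \<in> bits n" and y: "y \<in> bits n"
  have "conj_gate n Iu G x y = (\<Sum>z\<in>bits n. (\<Sum>w\<in>bits n. (if x = w then 1 else 0) * G w z) * cnj (if y = z then 1 else 0))"
    unfolding conj_gate_def op_mult_def op_adj_def using x y
    by (intro sum.cong refl arg_cong2[where f="(*)"]) (auto simp: tp_Iu simp del: if10_mult mult_if10)
  also have "\<dots> = G x y" using x y by (simp add: if_distrib[of cnj] cong: if_cong)
  finally show "conj_gate n Iu G x y = G x y" .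
qed

lemma At_pos: "At b \<ge> 1" by (induction b) auto

definition notf :: "bool list \<Rightarrow> bool list" where "notf y = butlast y @ [\<not> last y]"
definition xorf :: "nat \<Rightarrow> bool list \<Rightarrow> bool list" where
  "xorf m y = take m y @ butlast (drop m y) @ [last (take m y) \<noteq> last (drop m y)]"
definition toff :: "nat \<Rightarrow> nat \<Rightarrow> bool list \<Rightarrow> bool list" where
  "toff m k y = take m y @ take k (drop m y) @ butlast (drop (m + k) y)
       @ [(last (take m y) \<and> last (take k (drop m y))) \<noteq> last (drop (m + k) y)]"

lemma NOT_perm: "NOT_gate = perm_op notf" by (simp add: NOT_gate_def notf_def[abs_def])
lemma XOR_perm: "XOR_gate m = perm_op (xorf m)" by (simp add: XOR_gate_def xorf_def[abs_def])
lemma TOF_perm: "Toffoli_gate m k = perm_op (toff m k)" by (simp add: Toffoli_gate_def toff_def[abs_def])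

lemma notf_bits: "n \<ge> 1 \<Longrightarrow> y \<in> bits n \<Longrightarrow> notf y \<in> bits n" by (simp add: notf_def)
lemma notf_inj: "n \<ge> 1 \<Longrightarrow> inj_on notf (bits n)"
proof (rule inj_onI)
  fix y y' assume n: "n \<ge> 1" and y: "y \<in> bits n" and y': "y' \<in> bits n" and e: "notf y = notf y'"
  have ne: "y \<noteq> []" "y' \<noteq> []" using n y y' by auto
  from e have "butlast y @ [\<not> last y] = butlast y' @ [\<not> last y']" by (simp only: notf_def)
  hence "butlast y = butlast y' \<and> (\<not> last y) = (\<not> last y')" by (rule iffD1[OF append1_eq_conv])
  hence "butlast y @ [last y] = butlast y' @ [last y']" by simp
  thus "y = y'" using ne by simp
qed

lemma xorf_bits: "m \<ge> 1 \<Longrightarrow> k \<ge> 1 \<Longrightarrow> y \<in> bits (m+k) \<Longrightarrow> xorf m y \<in> bits (m+k)"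
  by (simp add: xorf_def)
lemma xorf_inj: assumes "m \<ge> 1" "k \<ge> 1" shows "inj_on (xorf m) (bits (m+k))"
proof (rule inj_onI)
  fix y y' assume y: "y \<in> bits (m+k)" and y': "y' \<in> bits (m+k)" and e: "xorf m y = xorf m y'"
  define T where "T = take m y"
  define D where "D = drop m y"
  define T' where "T' = take m y'"
  define D' where "D' = drop m y'"
  have l: "length T = m" "length T' = m" "length D = k" "length D' = k" using y y' assms
    by (auto simp: T_def D_def T'_def D'_def)
  have ne: "D \<noteq> []" "D' \<noteq> []" using l assms by auto
  from e have "T @ (butlast D @ [last T \<noteq> last D]) = T' @ (butlast D' @ [last T' \<noteq> last D'])"
    by (simp only: xorf_def T_def D_def T'_def D'_def)
  hence "T = T' \<and> butlast D @ [last T \<noteq> last D] = butlast D' @ [last T' \<noteq> last D']"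
    using append_eq_append_conv[of T T'] l by (metis)
  hence tt: "T = T'" and e2: "butlast D @ [last T \<noteq> last D] = butlast D' @ [last T' \<noteq> last D']" by blast+
  from e2 have b1: "butlast D = butlast D'" and b2: "(last T \<noteq> last D) = (last T' \<noteq> last D')"
    unfolding append1_eq_conv by blast+
  have "last D = last D'" using b2 tt by blast
  hence "butlast D @ [last D] = butlast D' @ [last D']" using b1 by simp
  hence "D = D'" using ne by simp
  thus "y = y'" using tt unfolding T_def D_def T'_def D'_def by (metis append_take_drop_id)
qed

lemma toff_bits: "m \<ge> 1 \<Longrightarrow> k \<ge> 1 \<Longrightarrow> p \<ge> 1 \<Longrightarrow> y \<in> bits (m+k+p) \<Longrightarrow> toff m k y \<in> bits (m+k+p)"
  by (simp add: toff_def)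
lemma toff_inj: assumes "m \<ge> 1" "k \<ge> 1" "p \<ge> 1" shows "inj_on (toff m k) (bits (m+k+p))"
proof (rule inj_onI)
  fix y y' assume y: "y \<in> bits (m+k+p)" and y': "y' \<in> bits (m+k+p)" and e: "toff m k y = toff m k y'"
  define T where "T = take m y"
  define K where "K = take k (drop m y)"
  define D where "D = drop (m+k) y"
  define T' where "T' = take m y'"
  define K' where "K' = take k (drop m y')"
  define D' where "D' = drop (m+k) y'"
  have l: "length T = m" "length T' = m" "length K = k" "length K' = k" "length D = p" "length D' = p"
    using y y' assms by (auto simp: T_def D_def T'_def D'_def K_def K'_def)
  have ne: "D \<noteq> []" "D' \<noteq> []" using l assms by auto
  from e have "T @ (K @ (butlast D @ [(last T \<and> last K) \<noteq> last D])) = T' @ (K' @ (butlast D' @ [(last T' \<and> last K') \<noteq> last D']))"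
    by (simp only: toff_def T_def D_def T'_def D'_def K_def K'_def)
  hence "T = T' \<and> K @ (butlast D @ [(last T \<and> last K) \<noteq> last D]) = K' @ (butlast D' @ [(last T' \<and> last K') \<noteq> last D'])"
    using append_eq_append_conv[of T T'] l by (metis)
  hence tt: "T = T'" and "K @ (butlast D @ [(last T \<and> last K) \<noteq> last D]) = K' @ (butlast D' @ [(last T' \<and> last K') \<noteq> last D'])"
    by auto
  hence "K = K' \<and> butlast D @ [(last T \<and> last K) \<noteq> last D] = butlast D' @ [(last T' \<and> last K') \<noteq> last D']"
    using append_eq_append_conv[of K K'] l by (metis)
  hence kk: "K = K'" and e2: "butlast D @ [(last T \<and> last K) \<noteq> last D] = butlast D' @ [(last T' \<and> last K') \<noteq> last D']" by blast+
  from e2 have b1: "butlast D = butlast D'" and b2: "((last T \<and> last K) \<noteq> last D) = ((last T' \<and> last K') \<noteq> last D')"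
    unfolding append1_eq_conv by blast+
  have "last D = last D'" using b2 tt kk by blast
  hence "butlast D @ [last D] = butlast D' @ [last D']" using b1 by simp
  hence dd: "D = D'" using ne by simp
  have "y = T @ K @ D" unfolding T_def K_def D_def by (metis append_take_drop_id drop_drop add.commute)
  moreover have "y' = T' @ K' @ D'" unfolding T'_def K'_def D'_def by (metis append_take_drop_id drop_drop add.commute)
  ultimately show "y = y'" using tt kk dd by simp
qed

lemma unit_last:
  assumes n: "n \<ge> 1" and g: "\<And>c d. cnj (g False c) * g False d + cnj (g True c) * g True d = (if c = d then 1 else 0)"
  shows "unit n (\<lambda>x y. if butlast x = butlast y then g (last x) (last y) else 0)"
  unfolding unit_def
proof (intro ballI)
  fix u v assume u: "u \<in> bits n" and v: "v \<in> bits n"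
  obtain m where m: "n = m + 1" using n by (metis add.commute le_add_diff_inverse)
  have ne: "u \<noteq> []" "v \<noteq> []" using u v n by auto
  have uu: "u = butlast u @ [last u]" and vv: "v = butlast v @ [last v]" using ne by simp_all
  have "(\<Sum>x\<in>bits n. cnj (if butlast x = butlast u then g (last x) (last u) else 0) * (if butlast x = butlast v then g (last x) (last v) else 0))
     = (\<Sum>y\<in>bits m. \<Sum>z\<in>bits 1. cnj (if y = butlast u then g (last z) (last u) else 0) * (if y = butlast v then g (last z) (last v) else 0))"
    unfolding m sum_bits_add by (rule sum.cong[OF refl], rule sum.cong[OF refl]) (auto simp: butlast_append length_Suc_conv)
  also have "\<dots> = (\<Sum>y\<in>bits m. if y = butlast u \<and> y = butlast v then (if last u = last v then 1 else 0) else 0)"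
    by (rule sum.cong[OF refl]) (auto simp: sum_bits_1[simplified] g)
  also have "\<dots> = (\<Sum>y\<in>bits m. if y = butlast u then (if butlast u = butlast v \<and> last u = last v then 1 else 0) else 0)"
    by (rule sum.cong[OF refl]) auto
  also have "\<dots> = (if butlast u = butlast v \<and> last u = last v then 1 else 0)"
    using u m by simp
  also have "\<dots> = (if u = v then 1 else 0)"
  proof -
    have "(butlast u = butlast v \<and> last u = last v) = (u = v)"
      using uu vv append1_eq_conv[of "butlast u" "last u" "butlast v" "last v"] by auto
    thus ?thesis by simp
  qed
  finally show "(\<Sum>x\<in>bits n. cnj (if butlast x = butlast u then g (last x) (last u) else 0) * (if butlast x = butlast v then g (last x) (last v) else 0)) = (if u = v then 1 else 0)" .
qed

lemma sqrt2_sq: "complex_of_real (sqrt 2) * complex_of_real (sqrt 2) = 2"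
proof -
  have "sqrt 2 * sqrt 2 = (2::real)" by simp
  hence "complex_of_real (sqrt 2 * sqrt 2) = 2" by simp
  thus ?thesis by (simp only: of_real_mult)
qed
lemma s_sq: "cnj (1 / complex_of_real (sqrt 2)) * (1 / complex_of_real (sqrt 2)) = 1/2"
proof -
  have "cnj (1 / complex_of_real (sqrt 2)) = 1 / complex_of_real (sqrt 2)" by simp
  hence "cnj (1 / complex_of_real (sqrt 2)) * (1 / complex_of_real (sqrt 2)) = 1 / (complex_of_real (sqrt 2) * complex_of_real (sqrt 2))"
    by simp
  thus ?thesis by (simp only: sqrt2_sq)
qed
lemma unit_sqrtI: "n \<ge> 1 \<Longrightarrow> unit n sqrtI_gate"
proof -
  assume n: "n \<ge> 1"
  define s where "s = 1 / complex_of_real (sqrt 2)"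
  have cs: "cnj s = s" by (simp add: s_def)
  have ss: "s * s = 1/2" using s_sq cs unfolding s_def by simp
  define g where "g = (\<lambda>b c. if b = c then (if c then - s else s) else s)"
  have e: "sqrtI_gate = (\<lambda>x y. if butlast x = butlast y then g (last x) (last y) else 0)"
    by (intro ext) (simp add: sqrtI_gate_def g_def s_def)
  have "cnj (g False c) * g False d + cnj (g True c) * g True d = (if c = d then 1 else 0)" for c d
    using ss cs by (cases c; cases d) (simp_all add: g_def mult.commute)
  thus ?thesis unfolding e by (rule unit_last[OF n])
qed

lemma unit_sqrtNOT: "n \<ge> 1 \<Longrightarrow> unit n sqrtNOT_gate"
proof -
  assume n: "n \<ge> 1"
  define g :: "bool \<Rightarrow> bool \<Rightarrow> complex" where "g = (\<lambda>b c. if b = c then (1 - \<i>) / 2 else (1 + \<i>) / 2)"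
  have e: "sqrtNOT_gate = (\<lambda>x y. if butlast x = butlast y then g (last x) (last y) else 0)"
    by (intro ext) (simp add: sqrtNOT_gate_def g_def)
  have "cnj (g False c) * g False d + cnj (g True c) * g True d = (if c = d then 1 else 0)" for c d
    by (cases c; cases d) (auto simp: g_def complex_eq_iff)
  thus ?thesis unfolding e by (rule unit_last[OF n])
qed

lemma unit_node: "unit (At b) (node_gate Iu b)"
proof (cases b)
  case (Neg a)
  have "unit (At a) NOT_gate" unfolding NOT_perm using At_pos[of a] by (intro unit_perm notf_bits notf_inj) auto
  then show ?thesis using Neg by (auto intro: unit_cong[OF op_eq_sym[OF conj_gate_Iu]])
next
  case (SqId a)
  then show ?thesis using unit_sqrtI[OF At_pos[of a]] by (auto intro: unit_cong[OF op_eq_sym[OF conj_gate_Iu]])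
next
  case (SqNeg a)
  then show ?thesis using unit_sqrtNOT[OF At_pos[of a]] by (auto intro: unit_cong[OF op_eq_sym[OF conj_gate_Iu]])
next
  case (Xor a c)
  have "unit (At a + At c) (XOR_gate (At a))" unfolding XOR_perm using At_pos[of a] At_pos[of c]
    by (intro unit_perm xorf_bits xorf_inj) auto
  then show ?thesis using Xor by (auto intro: unit_cong[OF op_eq_sym[OF conj_gate_Iu]])
next
  case (Tof a c d)
  have "unit (At a + At c + At d) (Toffoli_gate (At a) (At c))" unfolding TOF_perm using At_pos[of a] At_pos[of c] At_pos[of d]
    by (intro unit_perm toff_bits toff_inj) auto
  then show ?thesis using Tof by (auto intro: unit_cong[OF op_eq_sym[OF conj_gate_Iu]])
qed (auto simp: unit_id)

lemma unit_level_gate: "unit (sum_list (map At l)) (level_gate Iu l)"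
  by (induction l) (auto simp: level_gate_def unit_id intro: unit_tensor unit_node)

lemma height_pos: "height b \<ge> 1" by (cases b) auto

lemma atomic_facts: "is_atomic b \<Longrightarrow> expand b = [b] \<and> At b = 1 \<and> node_gate U b = op_id \<and> height b = 1"
  by (cases b) auto

lemma height_ne0[simp]: "height b \<noteq> 0" using height_pos[of b] by simp

lemma height1_atomic: "height b = 1 \<Longrightarrow> is_atomic b"
  by (cases b) auto

lemma sum_At_expand: "sum_list (map At (expand b)) = At b"
  by (cases b) auto

lemma next_level_append: "next_level (xs @ ys) = next_level xs @ next_level ys"
  by (simp add: next_level_def)

lemma nl_pow_append: "(next_level ^^ k) (xs @ ys) = (next_level ^^ k) xs @ (next_level ^^ k) ys"
  by (induction k) (simp_all add: next_level_append)

lemma sum_At_nl: "sum_list (map At (next_level l)) = sum_list (map At l)"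
  by (induction l) (simp_all add: next_level_def sum_At_expand)

lemma sum_At_nl_pow: "sum_list (map At ((next_level ^^ k) l)) = sum_list (map At l)"
  by (induction k) (simp_all add: sum_At_nl)

lemma level_Suc: "i \<ge> 1 \<Longrightarrow> level g (Suc i) = next_level (level g i)"
  unfolding level_def by (cases i) auto

lemma level_add: "i \<ge> 1 \<Longrightarrow> level g (i + k) = (next_level ^^ k) (level g i)"
  unfolding level_def by (cases i) (simp_all add: add.commute[of _ k] funpow_add)

lemma At_level: "sum_list (map At (level g i)) = At g"
  unfolding level_def by (simp add: sum_At_nl_pow)

lemma level_1[simp]: "level g 1 = [g]" by (simp add: level_def)
lemma level_1'[simp]: "level g (Suc 0) = [g]" by (simp add: level_def)

lemma height_level: "i \<ge> 1 \<Longrightarrow> x \<in> set (level g i) \<Longrightarrow> is_atomic x \<or> height x + i \<le> height g + 1"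
proof (induction i arbitrary: x rule: nat_induct_at_least)
  case base
  then show ?case by (simp add: level_1)
next
  case (Suc n)
  from Suc.prems obtain y where y: "y \<in> set (level g n)" and x: "x \<in> set (expand y)"
    using Suc.hyps by (auto simp: level_Suc next_level_def)
  show ?case
  proof (cases "is_atomic y")
    case True
    then show ?thesis using x atomic_facts[OF True] by auto
  next
    case False
    have "height x + 1 \<le> height y" using False x by (cases y) auto
    moreover have "height y + n \<le> height g + 1" using Suc.IH[OF y] False by auto
    ultimately show ?thesis by simp
  qed
qed

lemma level_atomic_beyond: "i \<ge> height g \<Longrightarrow> x \<in> set (level g i) \<Longrightarrow> is_atomic x"
proof -
  assume i: "i \<ge> height g" and x: "x \<in> set (level g i)"
  have i1: "i \<ge> 1" using i height_pos[of g] by simp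
  from height_level[OF i1 x] show ?thesis
  proof
    assume "height x + i \<le> height g + 1"
    hence "height x \<le> 1" using i by simp
    hence "height x = 1" using height_pos[of x] by simp
    thus ?thesis by (rule height1_atomic)
  qed
qed

lemma occ_height: "i \<ge> 1 \<Longrightarrow> i \<le> height g \<Longrightarrow> x \<in> set (level g i) \<Longrightarrow> height x + i \<le> height g + 1"
  using height_level[of i x g] atomic_facts[of x] by auto

lemma nl_atomic: "\<forall>x\<in>set l. is_atomic x \<Longrightarrow> next_level l = l"
  by (induction l) (auto simp: next_level_def atomic_facts)

lemma op_tensor_id: "op_tensor m op_id op_id = op_id"
  by (intro ext) (auto simp: op_tensor_def op_id_def, metis append_take_drop_id)

lemma level_gate_Cons: "level_gate U (a # l) = op_tensor (At a) (node_gate U a) (level_gate U l)"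
  by (simp add: level_gate_def)
lemma level_gate_Nil: "level_gate U [] = op_id"
  by (simp add: level_gate_def)

lemma level_gate_atomic: "\<forall>x\<in>set l. is_atomic x \<Longrightarrow> level_gate U l = op_id"
proof (induction l)
  case Nil then show ?case by (simp add: level_gate_Nil)
next
  case (Cons a l)
  have "is_atomic a" using Cons.prems by simp
  hence "node_gate U a = op_id" using atomic_facts[of a U] by (simp only: simp_thms)
  moreover have "level_gate U l = op_id" using Cons by simp
  ultimately show ?case by (simp only: level_gate_Cons op_tensor_id)
qed

lemma op_tensor_assoc: "op_tensor m A (op_tensor k B C) = op_tensor (m+k) (op_tensor m A B) C"
proof (intro ext)
  fix x y :: "bool list"
  have t: "take m (take (m+k) z) = take m z" "drop m (take (m+k) z) = take k (drop m z)" "drop (m+k) z = drop k (drop m z)" for z :: "bool list"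
    by (simp_all add: take_take drop_take drop_drop add.commute)
  show "op_tensor m A (op_tensor k B C) x y = op_tensor (m+k) (op_tensor m A B) C x y"
    unfolding op_tensor_def t by (simp only: mult.assoc)
qed

lemma op_tensor_0: "op_tensor 0 op_id X = X"
  by (intro ext) (simp add: op_tensor_def op_id_def)

lemma otl_append: "op_tensor_list (xs @ ys) = op_tensor (sum_list (map fst xs)) (op_tensor_list xs) (op_tensor_list ys)"
proof (induction xs)
  case Nil
  then show ?case by (simp add: op_tensor_0)
next
  case (Cons a xs)
  then show ?case by (cases a) (simp add: op_tensor_assoc)
qed

lemma level_gate_append: "level_gate U (xs @ ys) = op_tensor (sum_list (map At xs)) (level_gate U xs) (level_gate U ys)"
  unfolding level_gate_def by (simp add: otl_append comp_def)

fun leaves :: "form \<Rightarrow> form list" where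
  "leaves (Neg a) = leaves a"
| "leaves (SqId a) = leaves a"
| "leaves (SqNeg a) = leaves a"
| "leaves (Xor a b) = leaves a @ leaves b"
| "leaves (Tof a b c) = leaves a @ leaves b @ leaves c"
| "leaves a = [a]"

lemma length_leaves: "length (leaves b) = At b" by (induction b) auto

lemma leaves_expand: "concat (map leaves (expand b)) = leaves b" by (cases b) auto

lemma leaves_nl: "concat (map leaves (next_level l)) = concat (map leaves l)"
  by (induction l) (simp_all add: next_level_def leaves_expand)

lemma leaves_level: "concat (map leaves (level g i)) = leaves g"
proof -
  have "concat (map leaves ((next_level ^^ k) l)) = concat (map leaves l)" for k l
    by (induction k) (simp_all add: leaves_nl)
  thus ?thesis by (simp add: level_def)
qed

lemma length_concat_leaves: "length (concat (map leaves l)) = sum_list (map At l)"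
  by (induction l) (simp_all add: length_leaves)

fun HH :: "form \<Rightarrow> qop \<Rightarrow> nat \<Rightarrow> qop" where
  "HH g \<rho> 0 = \<rho>"
| "HH g \<rho> (Suc d) = apply_op (At g) (level_gate Iu (level g (height g - Suc d))) (HH g \<rho> d)"

definition H :: "form \<Rightarrow> qop \<Rightarrow> nat \<Rightarrow> qop" where "H g \<rho> i = HH g \<rho> (height g - i)"

lemma H_top: "height g \<le> i \<Longrightarrow> H g \<rho> i = \<rho>" by (simp add: H_def)

lemma H_step: "i < height g \<Longrightarrow> H g \<rho> i = apply_op (At g) (level_gate Iu (level g i)) (H g \<rho> (Suc i))"
proof -
  assume i: "i < height g"
  have e: "height g - i = Suc (height g - Suc i)" using i by simp
  have e2: "height g - Suc (height g - Suc i) = i" using i by simp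
  show ?thesis unfolding H_def e by (simp only: HH.simps e2)
qed

lemma density_HH: "density (At g) \<rho> \<Longrightarrow> density (At g) (HH g \<rho> d)"
proof (induction d)
  case 0 then show ?case by simp
next
  case (Suc d)
  have "unit (At g) (level_gate Iu (level g (height g - Suc d)))"
    using unit_level_gate[of "level g (height g - Suc d)"] by (simp add: At_level)
  then show ?case using Suc by (simp add: density_apply)
qed

lemma density_H: "density (At g) \<rho> \<Longrightarrow> density (At g) (H g \<rho> i)"
  by (simp add: H_def density_HH)

lemma HH_cong: "op_eq (At g) \<rho> \<rho>' \<Longrightarrow> op_eq (At g) (HH g \<rho> d) (HH g \<rho>' d)"
  by (induction d) (simp_all add: apply_op_cong[of "At g"])

lemma H_cong: "op_eq (At g) \<rho> \<rho>' \<Longrightarrow> op_eq (At g) (H g \<rho> i) (H g \<rho>' i)"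
  by (simp add: H_def HH_cong)

definition redr :: "nat \<Rightarrow> nat \<Rightarrow> qop \<Rightarrow> qop" where
  "redr a b \<rho> = (\<lambda>x y. \<Sum>z\<in>bits a. \<Sum>w\<in>bits b. \<rho> (z @ x @ w) (z @ y @ w))"

lemma red_redr: "red dims j \<rho> = redr (sum_list (take j dims)) (sum_list (drop (Suc j) dims)) \<rho>"
  by (simp add: red_def redr_def)

lemma sum_swap4: "(\<Sum>a\<in>A. \<Sum>b\<in>B. \<Sum>c\<in>C. \<Sum>d\<in>D. f a b c d) = (\<Sum>c\<in>C. \<Sum>d\<in>D. \<Sum>a\<in>A. \<Sum>b\<in>B. f a b c d)"
proof -
  have "(\<Sum>a\<in>A. \<Sum>b\<in>B. \<Sum>c\<in>C. \<Sum>d\<in>D. f a b c d) = (\<Sum>a\<in>A. \<Sum>c\<in>C. \<Sum>d\<in>D. \<Sum>b\<in>B. f a b c d)"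
  proof (rule sum.cong[OF refl])
    fix a
    have "(\<Sum>b\<in>B. \<Sum>c\<in>C. \<Sum>d\<in>D. f a b c d) = (\<Sum>c\<in>C. \<Sum>b\<in>B. \<Sum>d\<in>D. f a b c d)" by (rule sum.swap)
    also have "\<dots> = (\<Sum>c\<in>C. \<Sum>d\<in>D. \<Sum>b\<in>B. f a b c d)" by (rule sum.cong[OF refl]) (rule sum.swap)
    finally show "(\<Sum>b\<in>B. \<Sum>c\<in>C. \<Sum>d\<in>D. f a b c d) = (\<Sum>c\<in>C. \<Sum>d\<in>D. \<Sum>b\<in>B. f a b c d)" .
  qed
  also have "\<dots> = (\<Sum>c\<in>C. \<Sum>a\<in>A. \<Sum>d\<in>D. \<Sum>b\<in>B. f a b c d)" by (rule sum.swap)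
  also have "\<dots> = (\<Sum>c\<in>C. \<Sum>d\<in>D. \<Sum>a\<in>A. \<Sum>b\<in>B. f a b c d)" by (rule sum.cong[OF refl]) (rule sum.swap)
  finally show ?thesis .
qed

lemma sum_swap3: "(\<Sum>a\<in>A. \<Sum>b\<in>B. \<Sum>c\<in>C. f a b c) = (\<Sum>c\<in>C. \<Sum>a\<in>A. \<Sum>b\<in>B. f a b c)"
proof -
  have "(\<Sum>a\<in>A. \<Sum>b\<in>B. \<Sum>c\<in>C. f a b c) = (\<Sum>a\<in>A. \<Sum>c\<in>C. \<Sum>b\<in>B. f a b c)"
    by (rule sum.cong[OF refl]) (rule sum.swap)
  also have "\<dots> = (\<Sum>c\<in>C. \<Sum>a\<in>A. \<Sum>b\<in>B. f a b c)" by (rule sum.swap)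
  finally show ?thesis .
qed

lemma collapse:
  assumes "v1 \<in> A" "v3 \<in> C" "finite A" "finite B" "finite C"
  shows "(\<Sum>u1\<in>A. \<Sum>u2\<in>B. \<Sum>u3\<in>C. if u1 = v1 then (if u3 = v3 then F u1 u2 u3 else 0) else (0::complex))
    = (\<Sum>u2\<in>B. F v1 u2 v3)"
proof -
  have "(\<Sum>u1\<in>A. \<Sum>u2\<in>B. \<Sum>u3\<in>C. if u1 = v1 then (if u3 = v3 then F u1 u2 u3 else 0) else (0::complex))
     = (\<Sum>u1\<in>A. if u1 = v1 then (\<Sum>u2\<in>B. \<Sum>u3\<in>C. if u3 = v3 then F u1 u2 u3 else 0) else 0)"
    by (rule sum.cong[OF refl]) simp
  also have "\<dots> = (\<Sum>u2\<in>B. \<Sum>u3\<in>C. if u3 = v3 then F v1 u2 u3 else 0)"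
    using assms by simp
  also have "\<dots> = (\<Sum>u2\<in>B. F v1 u2 v3)"
    using assms by simp
  finally show ?thesis .
qed

lemma local_gate:
  assumes uA: "unit a A" and uC: "unit b C" and x: "length x = n" and y: "length y = n"
  shows "redr a b (apply_op (a+n+b) (op_tensor a A (op_tensor n B C)) \<rho>) x y = apply_op n B (redr a b \<rho>) x y"
proof -
  define G where "G = op_tensor a A (op_tensor n B C)"
  define N where "N = a + n + b"
  have Gv: "G (z @ x' @ w) (u1 @ u2 @ u3) = A z u1 * (B x' u2 * C w u3)"
    if "length z = a" "length x' = n" "length w = b" "length u1 = a" "length u2 = n" "length u3 = b" for z x' w u1 u2 u3
    using that by (simp add: G_def op_tensor_def)
  define K where "K = (\<lambda>u v. \<Sum>z\<in>bits a. \<Sum>w\<in>bits b. G (z @ x @ w) u * cnj (G (z @ y @ w) v))"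
  have s1: "redr a b (apply_op N G \<rho>) x y = (\<Sum>v\<in>bits N. \<Sum>u\<in>bits N. \<rho> u v * K u v)"
  proof -
    have "redr a b (apply_op N G \<rho>) x y = (\<Sum>z\<in>bits a. \<Sum>w\<in>bits b. \<Sum>v\<in>bits N. \<Sum>u\<in>bits N. G (z @ x @ w) u * \<rho> u v * cnj (G (z @ y @ w) v))"
      by (simp add: redr_def apply_op_eq)
    also have "\<dots> = (\<Sum>v\<in>bits N. \<Sum>u\<in>bits N. \<Sum>z\<in>bits a. \<Sum>w\<in>bits b. G (z @ x @ w) u * \<rho> u v * cnj (G (z @ y @ w) v))"
      by (rule sum_swap4)
    also have "\<dots> = (\<Sum>v\<in>bits N. \<Sum>u\<in>bits N. \<rho> u v * K u v)"
      unfolding K_def by (rule sum.cong[OF refl], rule sum.cong[OF refl]) (simp add: sum_distrib_left mult_ac)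
    finally show ?thesis .
  qed
  have Kv: "K (u1 @ u2 @ u3) (v1 @ v2 @ v3) = (if v1 = u1 \<and> v3 = u3 then B x u2 * cnj (B y v2) else 0)"
    if l: "length u1 = a" "length u2 = n" "length u3 = b" "length v1 = a" "length v2 = n" "length v3 = b" for u1 u2 u3 v1 v2 v3
  proof -
    have "K (u1 @ u2 @ u3) (v1 @ v2 @ v3) = (\<Sum>z\<in>bits a. \<Sum>w\<in>bits b. (cnj (A z v1) * A z u1) * (cnj (C w v3) * C w u3) * (B x u2 * cnj (B y v2)))"
      unfolding K_def using l x y by (intro sum.cong refl) (simp add: Gv mult_ac)
    also have "\<dots> = (\<Sum>z\<in>bits a. cnj (A z v1) * A z u1) * (\<Sum>w\<in>bits b. cnj (C w v3) * C w u3) * (B x u2 * cnj (B y v2))"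
      by (subst sum_product, simp only: sum_distrib_right)
    also have "\<dots> = (if v1 = u1 then 1 else 0) * (if v3 = u3 then 1 else 0) * (B x u2 * cnj (B y v2))"
      using uA uC l unfolding unit_def by simp
    also have "\<dots> = (if v1 = u1 \<and> v3 = u3 then B x u2 * cnj (B y v2) else 0)" by simp
    finally show ?thesis .
  qed
  have s2: "(\<Sum>v\<in>bits N. \<Sum>u\<in>bits N. \<rho> u v * K u v)
     = (\<Sum>v1\<in>bits a. \<Sum>v2\<in>bits n. \<Sum>v3\<in>bits b. \<Sum>u2\<in>bits n. \<rho> (v1 @ u2 @ v3) (v1 @ v2 @ v3) * (B x u2 * cnj (B y v2)))"
  proof -
    have "(\<Sum>v\<in>bits N. \<Sum>u\<in>bits N. \<rho> u v * K u v)
      = (\<Sum>v1\<in>bits a. \<Sum>v2\<in>bits n. \<Sum>v3\<in>bits b. \<Sum>u1\<in>bits a. \<Sum>u2\<in>bits n. \<Sum>u3\<in>bits b.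
           \<rho> (u1 @ u2 @ u3) (v1 @ v2 @ v3) * K (u1 @ u2 @ u3) (v1 @ v2 @ v3))"
      unfolding N_def sum_bits_3 by simp
    also have "\<dots> = (\<Sum>v1\<in>bits a. \<Sum>v2\<in>bits n. \<Sum>v3\<in>bits b. \<Sum>u1\<in>bits a. \<Sum>u2\<in>bits n. \<Sum>u3\<in>bits b.
           (if u1 = v1 then (if u3 = v3 then \<rho> (u1 @ u2 @ u3) (v1 @ v2 @ v3) * (B x u2 * cnj (B y v2)) else 0) else 0))"
      by (intro sum.cong refl) (auto simp: Kv)
    also have "\<dots> = (\<Sum>v1\<in>bits a. \<Sum>v2\<in>bits n. \<Sum>v3\<in>bits b. \<Sum>u2\<in>bits n. \<rho> (v1 @ u2 @ v3) (v1 @ v2 @ v3) * (B x u2 * cnj (B y v2)))"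
      by (rule sum.cong[OF refl], rule sum.cong[OF refl], rule sum.cong[OF refl], rule collapse) auto
    finally show ?thesis .
  qed
  have s3: "apply_op n B (redr a b \<rho>) x y
     = (\<Sum>v2\<in>bits n. \<Sum>u2\<in>bits n. \<Sum>v1\<in>bits a. \<Sum>v3\<in>bits b. \<rho> (v1 @ u2 @ v3) (v1 @ v2 @ v3) * (B x u2 * cnj (B y v2)))"
    unfolding apply_op_eq redr_def
    by (rule sum.cong[OF refl], rule sum.cong[OF refl]) (simp add: sum_distrib_left sum_distrib_right mult_ac)
  have s4: "(\<Sum>v1\<in>bits a. \<Sum>v2\<in>bits n. \<Sum>v3\<in>bits b. \<Sum>u2\<in>bits n. f v1 v2 v3 u2)
      = (\<Sum>v2\<in>bits n. \<Sum>u2\<in>bits n. \<Sum>v1\<in>bits a. \<Sum>v3\<in>bits b. f v1 v2 v3 u2)" for f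
  proof -
    have "(\<Sum>v1\<in>bits a. \<Sum>v2\<in>bits n. \<Sum>v3\<in>bits b. \<Sum>u2\<in>bits n. f v1 v2 v3 u2)
       = (\<Sum>v1\<in>bits a. \<Sum>v2\<in>bits n. \<Sum>u2\<in>bits n. \<Sum>v3\<in>bits b. f v1 v2 v3 u2)"
      by (rule sum.cong[OF refl], rule sum.cong[OF refl]) (rule sum.swap)
    also have "\<dots> = (\<Sum>v2\<in>bits n. \<Sum>v1\<in>bits a. \<Sum>u2\<in>bits n. \<Sum>v3\<in>bits b. f v1 v2 v3 u2)"
      by (rule sum.swap)
    also have "\<dots> = (\<Sum>v2\<in>bits n. \<Sum>u2\<in>bits n. \<Sum>v1\<in>bits a. \<Sum>v3\<in>bits b. f v1 v2 v3 u2)"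
      by (rule sum.cong[OF refl]) (rule sum.swap)
    finally show ?thesis .
  qed
  show ?thesis using s1 s2 s3 s4 unfolding G_def N_def by simp
qed

lemma apply_id: "op_eq n (apply_op n op_id \<sigma>) \<sigma>"
  unfolding op_eq_def
proof (intro ballI)
  fix x y assume x: "x \<in> bits n" and y: "y \<in> bits n"
  have "apply_op n op_id \<sigma> x y = (\<Sum>z\<in>bits n. if y = z then (\<Sum>w\<in>bits n. if x = w then \<sigma> w z else 0) else 0)"
    unfolding apply_op_eq op_id_def by (intro sum.cong refl) auto
  also have "\<dots> = \<sigma> x y" using x y by simp
  finally show "apply_op n op_id \<sigma> x y = \<sigma> x y" .
qed

lemma level_split_pow:
  assumes lev: "level g i = L1 @ [b] @ L2" and i1: "1 \<le> i" and k: "i \<le> k"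
  shows "level g k = (next_level ^^ (k - i)) L1 @ level b (k - i + 1) @ (next_level ^^ (k - i)) L2"
proof -
  have "level g k = level g (i + (k - i))" using k by simp
  also have "\<dots> = (next_level ^^ (k - i)) (level g i)" using i1 by (rule level_add)
  also have "\<dots> = (next_level ^^ (k - i)) L1 @ (next_level ^^ (k - i)) [b] @ (next_level ^^ (k - i)) L2"
    unfolding lev by (simp only: nl_pow_append)
  also have "(next_level ^^ (k - i)) [b] = level b (k - i + 1)" by (simp add: level_def)
  finally show ?thesis .
qed

lemma block:
  assumes lev: "level g i = L1 @ [b] @ L2" and i1: "1 \<le> i" and ih: "i \<le> height g"
  shows "op_eq (At b) (redr (sum_list (map At L1)) (sum_list (map At L2)) (H g \<rho> i))
           (H b (redr (sum_list (map At L1)) (sum_list (map At L2)) \<rho>) 1)"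
proof -
  define a where "a = sum_list (map At L1)"
  define c where "c = sum_list (map At L2)"
  define \<rho>' where "\<rho>' = redr a c \<rho>"
  have bin: "b \<in> set (level g i)" using lev by simp
  have hb: "height b + i \<le> height g + 1" using occ_height[OF i1 ih bin] .
  have Ag: "At g = a + At b + c" using At_level[of g i] unfolding lev a_def c_def by simp
  have main: "\<forall>k. height g - k = d \<longrightarrow> i \<le> k \<longrightarrow> k \<le> height g \<longrightarrow>
      op_eq (At b) (redr a c (H g \<rho> k)) (H b \<rho>' (k - i + 1))" for d
  proof (induction d)
    case 0
    show ?case
    proof (intro allI impI)
      fix k assume "height g - k = 0" "i \<le> k" "k \<le> height g"
      hence kk: "k = height g" by simp
      have "H g \<rho> k = \<rho>" using kk by (simp add: H_top)
      moreover have "H b \<rho>' (k - i + 1) = \<rho>'" using kk hb by (intro H_top) simp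
      ultimately show "op_eq (At b) (redr a c (H g \<rho> k)) (H b \<rho>' (k - i + 1))" by (simp add: \<rho>'_def)
    qed
  next
    case (Suc d)
    show ?case
    proof (intro allI impI)
      fix k assume kd: "height g - k = Suc d" and ik: "i \<le> k" and kh: "k \<le> height g"
      have klt: "k < height g" using kd by simp
      define X where "X = (next_level ^^ (k - i)) L1"
      define Z where "Z = (next_level ^^ (k - i)) L2"
      define Y where "Y = level b (k - i + 1)"
      have levk: "level g k = X @ Y @ Z" unfolding X_def Y_def Z_def by (rule level_split_pow[OF lev i1 ik])
      have aX: "sum_list (map At X) = a" unfolding X_def a_def by (rule sum_At_nl_pow)
      have cZ: "sum_list (map At Z) = c" unfolding Z_def c_def by (rule sum_At_nl_pow)
      have bY: "sum_list (map At Y) = At b" unfolding Y_def by (rule At_level)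
      have lg: "level_gate Iu (level g k) = op_tensor a (level_gate Iu X) (op_tensor (At b) (level_gate Iu Y) (level_gate Iu Z))"
        unfolding levk level_gate_append aX bY by simp
      have uX: "unit a (level_gate Iu X)" using unit_level_gate[of X] aX by simp
      have uZ: "unit c (level_gate Iu Z)" using unit_level_gate[of Z] cZ by simp
      have IH: "op_eq (At b) (redr a c (H g \<rho> (Suc k))) (H b \<rho>' (Suc k - i + 1))"
        using Suc.IH kd ik klt by auto
      have step1: "op_eq (At b) (redr a c (H g \<rho> k)) (apply_op (At b) (level_gate Iu Y) (redr a c (H g \<rho> (Suc k))))"
        unfolding op_eq_def
      proof (intro ballI)
        fix x y assume x: "x \<in> bits (At b)" and y: "y \<in> bits (At b)"
        have "H g \<rho> k = apply_op (a + At b + c) (op_tensor a (level_gate Iu X) (op_tensor (At b) (level_gate Iu Y) (level_gate Iu Z))) (H g \<rho> (Suc k))"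
          using H_step[OF klt] lg Ag by simp
        thus "redr a c (H g \<rho> k) x y = apply_op (At b) (level_gate Iu Y) (redr a c (H g \<rho> (Suc k))) x y"
          using local_gate[OF uX uZ, of x "At b" y] x y by simp
      qed
      have step2: "apply_op (At b) (level_gate Iu Y) (redr a c (H g \<rho> (Suc k))) = apply_op (At b) (level_gate Iu Y) (H b \<rho>' (Suc k - i + 1))"
        by (rule apply_op_cong[OF IH])
      have step3: "op_eq (At b) (apply_op (At b) (level_gate Iu Y) (H b \<rho>' (Suc k - i + 1))) (H b \<rho>' (k - i + 1))"
      proof (cases "k - i + 1 < height b")
        case True
        have "H b \<rho>' (k - i + 1) = apply_op (At b) (level_gate Iu Y) (H b \<rho>' (Suc (k - i + 1)))"
          unfolding Y_def by (rule H_step[OF True])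
        moreover have "Suc (k - i + 1) = Suc k - i + 1" using ik by simp
        ultimately show ?thesis by simp
      next
        case False
        have at: "\<forall>x\<in>set Y. is_atomic x" unfolding Y_def using False by (intro ballI level_atomic_beyond) auto
        have "H b \<rho>' (k - i + 1) = \<rho>'" using False by (intro H_top) simp
        moreover have "H b \<rho>' (Suc k - i + 1) = \<rho>'" using False by (intro H_top) simp
        ultimately show ?thesis using apply_id[of "At b" \<rho>'] level_gate_atomic[OF at] by simp
      qed
      show "op_eq (At b) (redr a c (H g \<rho> k)) (H b \<rho>' (k - i + 1))"
        using step1 step2 step3 by (metis op_eq_trans)
    qed
  qed
  show ?thesis using main[of "height g - i"] ih unfolding a_def[symmetric] c_def[symmetric] \<rho>'_def by simp
qed

definition mixv :: "(bool \<Rightarrow> bool list) \<Rightarrow> qop" where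
  "mixv us = (\<lambda>x y. (\<Sum>c\<in>UNIV. if x = us c \<and> y = us c then 1 else 0) / 2)"

lemma mixv_eq: "mixv us x y = ((if x = us False \<and> y = us False then 1 else 0) + (if x = us True \<and> y = us True then 1 else 0)) / 2"
  by (simp add: mixv_def UNIV_bool add.commute)

lemma density_mixv: assumes l: "\<And>c. length (us c) = n" shows "density n (mixv us)"
proof -
  have H: "\<forall>x\<in>bits n. \<forall>y\<in>bits n. mixv us x y = cnj (mixv us y x)"
    by (auto simp: mixv_eq)
  have Q: "(\<Sum>x\<in>bits n. \<Sum>y\<in>bits n. cnj (v x) * mixv us x y * v y)
     = (cnj (v (us False)) * v (us False) + cnj (v (us True)) * v (us True)) / 2" for v
  proof -
    have "(\<Sum>x\<in>bits n. \<Sum>y\<in>bits n. cnj (v x) * mixv us x y * v y)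
       = (\<Sum>x\<in>bits n. \<Sum>y\<in>bits n. ((if x = us False then (if y = us False then cnj (v x) * v y else 0) else 0)
            + (if x = us True then (if y = us True then cnj (v x) * v y else 0) else 0)) / 2)"
      by (intro sum.cong refl) (auto simp: mixv_eq field_simps)
    also have "\<dots> = (\<Sum>x\<in>bits n. ((if x = us False then cnj (v x) * v (us False) else 0)
            + (if x = us True then cnj (v x) * v (us True) else 0)) / 2)"
      using l by (intro sum.cong refl) (simp add: sum.distrib sum_divide_distrib[symmetric] if_distrib[of "\<lambda>t. t / 2"] cong: if_cong)
    also have "\<dots> = (cnj (v (us False)) * v (us False) + cnj (v (us True)) * v (us True)) / 2"
      using l by (simp add: sum.distrib sum_divide_distrib[symmetric])
    finally show ?thesis .
  qed
  have P: "\<forall>v. Im (\<Sum>x\<in>bits n. \<Sum>y\<in>bits n. cnj (v x) * mixv us x y * v y) = 0 \<and>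
        Re (\<Sum>x\<in>bits n. \<Sum>y\<in>bits n. cnj (v x) * mixv us x y * v y) \<ge> 0"
  proof
    fix v :: "bool list \<Rightarrow> complex"
    have a: "cnj z * z = complex_of_real ((Re z)\<^sup>2 + (Im z)\<^sup>2)" for z :: complex
      by (simp add: complex_mult_cnj mult.commute)
    show "Im (\<Sum>x\<in>bits n. \<Sum>y\<in>bits n. cnj (v x) * mixv us x y * v y) = 0 \<and>
        Re (\<Sum>x\<in>bits n. \<Sum>y\<in>bits n. cnj (v x) * mixv us x y * v y) \<ge> 0"
      unfolding Q a by simp
  qed
  have T: "op_trace n (mixv us) = 1"
  proof -
    have "op_trace n (mixv us) = (\<Sum>x\<in>bits n. ((if x = us False then 1 else 0) + (if x = us True then 1 else 0)) / 2)"
      unfolding op_trace_def by (intro sum.cong refl) (simp add: mixv_eq)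
    also have "\<dots> = 1" using l by (simp add: sum.distrib sum_divide_distrib[symmetric])
    finally show ?thesis .
  qed
  show ?thesis unfolding density_def using H P T by blast
qed

lemma redr_mixv:
  assumes l: "\<And>c. length (P c) = a" "\<And>c. length (M c) = n" "\<And>c. length (Q c) = b"
    and x: "length x = n" and y: "length y = n"
  shows "redr a b (mixv (\<lambda>c. P c @ M c @ Q c)) x y = mixv M x y"
proof -
  have e: "(\<Sum>z\<in>bits a. \<Sum>w\<in>bits b. if z @ x @ w = P c @ M c @ Q c \<and> z @ y @ w = P c @ M c @ Q c then 1 else 0)
      = (if x = M c \<and> y = M c then 1 else (0::complex))" for c
  proof -
    have "(\<Sum>z\<in>bits a. \<Sum>w\<in>bits b. if z @ x @ w = P c @ M c @ Q c \<and> z @ y @ w = P c @ M c @ Q c then 1 else (0::complex))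
       = (\<Sum>z\<in>bits a. if z = P c then (\<Sum>w\<in>bits b. if w = Q c then (if x = M c \<and> y = M c then 1 else 0) else 0) else 0)"
      using l x y by (intro sum.cong refl) auto
    also have "\<dots> = (if x = M c \<and> y = M c then 1 else 0)" using l by simp
    finally show ?thesis .
  qed
  have "redr a b (mixv (\<lambda>c. P c @ M c @ Q c)) x y
      = (\<Sum>z\<in>bits a. \<Sum>w\<in>bits b. \<Sum>c\<in>UNIV. (if z @ x @ w = P c @ M c @ Q c \<and> z @ y @ w = P c @ M c @ Q c then 1 else 0) / 2)"
    by (simp add: redr_def mixv_def sum_divide_distrib)
  also have "\<dots> = (\<Sum>c\<in>UNIV. \<Sum>z\<in>bits a. \<Sum>w\<in>bits b. (if z @ x @ w = P c @ M c @ Q c \<and> z @ y @ w = P c @ M c @ Q c then 1 else 0) / 2)"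
    by (rule sum_swap3)
  also have "\<dots> = (\<Sum>c\<in>UNIV. (\<Sum>z\<in>bits a. \<Sum>w\<in>bits b. if z @ x @ w = P c @ M c @ Q c \<and> z @ y @ w = P c @ M c @ Q c then 1 else 0) / 2)"
    by (simp only: sum_divide_distrib)
  also have "\<dots> = mixv M x y" by (simp add: e mixv_def sum_divide_distrib)
  finally show ?thesis .
qed

definition isAt :: "form \<Rightarrow> bool" where "isAt l = (case l of Atom _ \<Rightarrow> True | _ \<Rightarrow> False)"

definition lv :: "form \<Rightarrow> bool \<Rightarrow> bool \<Rightarrow> bool" where
  "lv l s c = (case l of Atom _ \<Rightarrow> (c \<noteq> s) | Tr \<Rightarrow> True | _ \<Rightarrow> False)"

definition vals :: "form list \<Rightarrow> bool list \<Rightarrow> bool \<Rightarrow> bool list" where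
  "vals ls ss c = map (\<lambda>(l, s). lv l s c) (zip ls ss)"

lemma length_vals: "length (vals ls ss c) = min (length ls) (length ss)"
  by (simp add: vals_def)

lemma vals_append: "length ls1 = length ss1 \<Longrightarrow> vals (ls1 @ ls2) (ss1 @ ss2) c = vals ls1 ss1 c @ vals ls2 ss2 c"
  by (simp add: vals_def)

definition sim :: "form list \<Rightarrow> bool list \<Rightarrow> bool list \<Rightarrow> bool" where
  "sim ls s1 s2 \<longleftrightarrow> length s1 = length ls \<and> length s2 = length ls \<and>
     ((\<forall>k<length ls. isAt (ls ! k) \<longrightarrow> s1 ! k = s2 ! k) \<or> (\<forall>k<length ls. isAt (ls ! k) \<longrightarrow> s1 ! k \<noteq> s2 ! k))"

lemma lv_nonAt: "\<not> isAt l \<Longrightarrow> lv l s c = lv l s' c'"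
  by (cases l) (auto simp: isAt_def lv_def)

lemma mixv_sim: assumes "sim ls s1 s2" shows "mixv (vals ls s1) = mixv (vals ls s2)"
proof -
  have l: "length s1 = length ls" "length s2 = length ls" using assms by (auto simp: sim_def)
  from assms consider "\<forall>k<length ls. isAt (ls ! k) \<longrightarrow> s1 ! k = s2 ! k" | "\<forall>k<length ls. isAt (ls ! k) \<longrightarrow> s1 ! k \<noteq> s2 ! k"
    unfolding sim_def by blast
  then show ?thesis
  proof cases
    case 1
    have "vals ls s1 c = vals ls s2 c" for c
    proof (rule nth_equalityI)
      show "length (vals ls s1 c) = length (vals ls s2 c)" using l by (simp add: length_vals)
      fix k assume "k < length (vals ls s1 c)"
      hence k: "k < length ls" using l by (simp add: length_vals)
      show "vals ls s1 c ! k = vals ls s2 c ! k"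
        using 1 k l lv_nonAt[of "ls ! k" "s1 ! k" c "s2 ! k" c] by (cases "isAt (ls ! k)") (auto simp: vals_def)
    qed
    thus ?thesis by presburger
  next
    case 2
    have "vals ls s1 c = vals ls s2 (\<not> c)" for c
    proof (rule nth_equalityI)
      show "length (vals ls s1 c) = length (vals ls s2 (\<not> c))" using l by (simp add: length_vals)
      fix k assume "k < length (vals ls s1 c)"
      hence k: "k < length ls" using l by (simp add: length_vals)
      have "lv (ls ! k) (s1 ! k) c = lv (ls ! k) (s2 ! k) (\<not> c)"
      proof (cases "isAt (ls ! k)")
        case True
        then obtain m where "ls ! k = Atom m" by (cases "ls ! k") (auto simp: isAt_def)
        then show ?thesis using 2 k True by (auto simp: lv_def)
      next
        case False
        then show ?thesis by (rule lv_nonAt)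
      qed
      thus "vals ls s1 c ! k = vals ls s2 (\<not> c) ! k" using k l by (simp add: vals_def)
    qed
    thus ?thesis by (intro ext) (simp add: mixv_eq add.commute)
  qed
qed

fun pexpand :: "form \<Rightarrow> nat \<Rightarrow> (form \<times> nat) list" where
  "pexpand (Neg a) o' = [(a, o')]"
| "pexpand (SqId a) o' = [(a, o')]"
| "pexpand (SqNeg a) o' = [(a, o')]"
| "pexpand (Xor a b) o' = [(a, o'), (b, o' + At a)]"
| "pexpand (Tof a b c) o' = [(a, o'), (b, o' + At a), (c, o' + At a + At b)]"
| "pexpand x o' = [(x, o')]"

definition pnext :: "(form \<times> nat) list \<Rightarrow> (form \<times> nat) list" where
  "pnext pl = concat (map (\<lambda>p. pexpand (fst p) (snd p)) pl)"

definition plevel :: "form \<Rightarrow> nat \<Rightarrow> (form \<times> nat) list" where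
  "plevel g i = (pnext ^^ (i - 1)) [(g, 0)]"

lemma map_fst_pexpand: "map fst (pexpand f o') = expand f" by (cases f) auto

lemma map_fst_pnext: "map fst (pnext pl) = next_level (map fst pl)"
  by (induction pl) (simp_all add: pnext_def next_level_def map_fst_pexpand)

lemma map_fst_plevel: "map fst (plevel g i) = level g i"
proof -
  have "map fst ((pnext ^^ k) pl) = (next_level ^^ k) (map fst pl)" for k pl
    by (induction k) (simp_all add: map_fst_pnext)
  thus ?thesis by (simp add: plevel_def level_def)
qed

fun consec :: "nat \<Rightarrow> (form \<times> nat) list \<Rightarrow> bool" where
  "consec o' [] = True"
| "consec o' (p # r) = (snd p = o' \<and> consec (o' + At (fst p)) r)"

lemma consec_append: "consec o' (xs @ ys) = (consec o' xs \<and> consec (o' + sum_list (map At (map fst xs))) ys)"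
  by (induction xs arbitrary: o') (auto simp: add.assoc)

lemma consec_pexpand: "consec o' (pexpand f o')" by (cases f) (auto simp: add.assoc)
lemma sum_pexpand: "sum_list (map At (map fst (pexpand f o'))) = At f" by (cases f) auto

lemma consec_pnext: "consec o' pl \<Longrightarrow> consec o' (pnext pl)"
proof (induction pl arbitrary: o')
  case Nil then show ?case by (simp add: pnext_def)
next
  case (Cons p r)
  have "pnext (p # r) = pexpand (fst p) (snd p) @ pnext r" by (simp add: pnext_def)
  then show ?case using Cons consec_pexpand[of "snd p" "fst p"] sum_pexpand[of "fst p" "snd p"]
    by (simp add: consec_append)
qed

lemma consec_plevel: "consec 0 (plevel g i)"
proof -
  have "consec 0 ((pnext ^^ k) [(g,0)])" for k by (induction k) (simp_all add: consec_pnext)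
  thus ?thesis by (simp add: plevel_def)
qed

lemma consec_nth: "consec o' pl \<Longrightarrow> j < length pl \<Longrightarrow> snd (pl ! j) = o' + sum_list (map At (take j (map fst pl)))"
proof (induction pl arbitrary: o' j)
  case Nil then show ?case by simp
next
  case (Cons p r)
  then show ?case by (cases j) (auto simp: add.assoc)
qed

fun nodes :: "form \<Rightarrow> nat \<Rightarrow> (form \<times> nat) list" where
  "nodes (Neg a) o' = (Neg a, o') # nodes a o'"
| "nodes (SqId a) o' = (SqId a, o') # nodes a o'"
| "nodes (SqNeg a) o' = (SqNeg a, o') # nodes a o'"
| "nodes (Xor a b) o' = (Xor a b, o') # nodes a o' @ nodes b (o' + At a)"
| "nodes (Tof a b c) o' = (Tof a b c, o') # nodes a o' @ nodes b (o' + At a) @ nodes c (o' + At a + At b)"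
| "nodes x o' = [(x, o')]"

lemma nodes_self: "(f, o') \<in> set (nodes f o')" by (cases f) auto

lemma nodes_pexpand: "p \<in> set (pexpand f o') \<Longrightarrow> set (nodes (fst p) (snd p)) \<subseteq> set (nodes f o')"
  by (cases f) auto

lemma plevel_nodes: "p \<in> set (plevel g i) \<Longrightarrow> set (nodes (fst p) (snd p)) \<subseteq> set (nodes g 0)"
proof -
  have "\<forall>p\<in>set ((pnext ^^ k) [(g,0)]). set (nodes (fst p) (snd p)) \<subseteq> set (nodes g 0)" for k
  proof (induction k)
    case 0 then show ?case by simp
  next
    case (Suc k)
    show ?case
    proof
      fix p assume "p \<in> set ((pnext ^^ Suc k) [(g, 0)])"
      then obtain q where q: "q \<in> set ((pnext ^^ k) [(g, 0)])" and p: "p \<in> set (pexpand (fst q) (snd q))"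
        by (auto simp: pnext_def)
      show "set (nodes (fst p) (snd p)) \<subseteq> set (nodes g 0)" using Suc q nodes_pexpand[OF p] by blast
    qed
  qed
  thus "p \<in> set (plevel g i) \<Longrightarrow> set (nodes (fst p) (snd p)) \<subseteq> set (nodes g 0)" by (simp add: plevel_def)
qed

lemma occ_nodes:
  assumes j: "j < length (level g i)"
  shows "(level g i ! j, sum_list (map At (take j (level g i)))) \<in> set (nodes g 0)"
proof -
  let ?pl = "plevel g i"
  have len: "j < length ?pl" using j map_fst_plevel[of g i] by (metis length_map)
  have f: "fst (?pl ! j) = level g i ! j" using len map_fst_plevel[of g i] by (metis nth_map)
  have s: "snd (?pl ! j) = sum_list (map At (take j (level g i)))"
    using consec_nth[OF consec_plevel len] map_fst_plevel[of g i] by simp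
  have "?pl ! j \<in> set ?pl" using len by simp
  hence "set (nodes (fst (?pl ! j)) (snd (?pl ! j))) \<subseteq> set (nodes g 0)" by (rule plevel_nodes)
  thus ?thesis using nodes_self[of "fst (?pl ! j)" "snd (?pl ! j)"] f s by auto
qed

lemma nodes_bound: "(f, o'') \<in> set (nodes g o') \<Longrightarrow> o' \<le> o'' \<and> o'' + At f \<le> o' + At g"
  by (induction g o' rule: nodes.induct) auto

definition HolS :: "(form \<Rightarrow> bool list) \<Rightarrow> form \<Rightarrow> nat \<Rightarrow> qop" where
  "HolS S g i = H g (mixv (vals (leaves g) (S g))) i"

definition segS :: "(form \<Rightarrow> bool list) \<Rightarrow> form \<Rightarrow> nat \<Rightarrow> nat \<Rightarrow> bool list" where
  "segS S g o' n = take n (drop o' (S g))"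

lemma ctx_occ:
  assumes lenS: "length (S g) = At g" and oc: "occ g b (i, j)"
  shows "op_eq (At b) (ctx (HolS S) g (i, j))
          (H b (mixv (vals (leaves b) (segS S g (sum_list (map At (take j (level g i)))) (At b)))) 1)"
proof -
  define l where "l = level g i"
  have i1: "1 \<le> i" and ih: "i \<le> height g" and jl: "j < length l" and lj: "l ! j = b"
    using oc by (auto simp: occ_def l_def)
  define L1 where "L1 = take j l"
  define L2 where "L2 = drop (Suc j) l"
  have lev: "level g i = L1 @ [b] @ L2" unfolding L1_def L2_def l_def[symmetric]
    using id_take_nth_drop[OF jl] lj by simp
  define a where "a = sum_list (map At L1)"
  define c where "c = sum_list (map At L2)"
  define \<rho> where "\<rho> = mixv (vals (leaves g) (S g))"
  have Ag: "At g = a + At b + c" using At_level[of g i] unfolding lev a_def c_def by simp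
  have ctx_eq: "ctx (HolS S) g (i, j) = redr a c (H g \<rho> i)"
    unfolding ctx_def HolS_def red_redr \<rho>_def a_def c_def L1_def L2_def l_def by (simp add: take_map drop_map)
  have B: "op_eq (At b) (redr a c (H g \<rho> i)) (H b (redr a c \<rho>) 1)"
    unfolding a_def c_def by (rule block[OF lev i1 ih])
  define S1 where "S1 = take a (S g)"
  define S2 where "S2 = take (At b) (drop a (S g))"
  define S3 where "S3 = drop (a + At b) (S g)"
  have Ssplit: "S g = S1 @ S2 @ S3" unfolding S1_def S2_def S3_def
    by (metis append_take_drop_id drop_drop add.commute)
  have lS: "length S1 = a" "length S2 = At b" "length S3 = c" using lenS Ag
    by (auto simp: S1_def S2_def S3_def)
  have Lsplit: "leaves g = concat (map leaves L1) @ leaves b @ concat (map leaves L2)"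
    using leaves_level[of g i] unfolding lev by simp
  have lL: "length (concat (map leaves L1)) = a" "length (leaves b) = At b" "length (concat (map leaves L2)) = c"
    by (simp_all add: length_concat_leaves length_leaves a_def c_def)
  have V: "vals (leaves g) (S g) x = vals (concat (map leaves L1)) S1 x @ vals (leaves b) S2 x @ vals (concat (map leaves L2)) S3 x" for x
    unfolding Lsplit Ssplit using lS lL by (simp add: vals_append)
  have R: "op_eq (At b) (redr a c \<rho>) (mixv (vals (leaves b) S2))"
    unfolding op_eq_def
  proof (intro ballI)
    fix x y assume x: "x \<in> bits (At b)" and y: "y \<in> bits (At b)"
    have "\<rho> = mixv (\<lambda>x. vals (concat (map leaves L1)) S1 x @ vals (leaves b) S2 x @ vals (concat (map leaves L2)) S3 x)"
      unfolding \<rho>_def V ..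
    thus "redr a c \<rho> x y = mixv (vals (leaves b) S2) x y"
      using redr_mixv[of "vals (concat (map leaves L1)) S1" a "vals (leaves b) S2" "At b" "vals (concat (map leaves L2)) S3" c x y]
        x y lS lL by (simp add: length_vals)
  qed
  have "op_eq (At b) (H b (redr a c \<rho>) 1) (H b (mixv (vals (leaves b) S2)) 1)" by (rule H_cong[OF R])
  moreover have "S2 = segS S g (sum_list (map At (take j (level g i)))) (At b)"
    unfolding S2_def segS_def a_def L1_def l_def ..
  ultimately show ?thesis using B ctx_eq by (metis op_eq_trans)
qed

definition goodS :: "form \<Rightarrow> bool list \<Rightarrow> bool" where
  "goodS g s \<longleftrightarrow> (\<forall>p\<in>set (nodes g 0). \<forall>q\<in>set (nodes g 0). fst p = fst q \<longrightarrow>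
      sim (leaves (fst p)) (take (At (fst p)) (drop (snd p) s)) (take (At (fst p)) (drop (snd q) s)))"

lemma occ_node: "occ g b (i, j) \<Longrightarrow> (b, sum_list (map At (take j (level g i)))) \<in> set (nodes g 0)"
proof -
  assume "occ g b (i, j)"
  hence "j < length (level g i)" "level g i ! j = b" by (simp_all add: occ_def)
  thus ?thesis using occ_nodes[of j g i] by simp
qed

lemma bits1_cases: "x \<in> bits 1 \<Longrightarrow> x = [False] \<or> x = [True]"
proof -
  assume "x \<in> bits 1"
  then obtain c where "x = [c]" by (auto simp: length_Suc_conv)
  thus ?thesis by (cases c) auto
qed

lemma len1_cases: "length x = Suc 0 \<Longrightarrow> x = [False] \<or> x = [True]"
  using bits1_cases[of x] by simp

lemma proj0_1: "op_eq 1 (proj0 1 Iu) (mixv (\<lambda>c. [False]))"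
proof -
  have s: "{z \<in> bits 1. \<not> last z} = {[False]}" by (auto dest: len1_cases)
  show ?thesis unfolding op_eq_def proj0_def s
    by (auto dest!: len1_cases simp: tp_Iu mixv_eq)
qed

lemma proj1_1: "op_eq 1 (proj1 1 Iu) (mixv (\<lambda>c. [True]))"
proof -
  have s: "{z \<in> bits 1. last z} = {[True]}" by (auto dest: len1_cases)
  show ?thesis unfolding op_eq_def proj1_def s
    by (auto dest!: len1_cases simp: tp_Iu mixv_eq)
qed

theorem hol_model:
  assumes lenS: "\<And>g. length (S g) = At g" and good: "\<And>g. goodS g (S g)"
  shows "holistic_model Iu (HolS S)"
proof -
  have C1: "\<forall>g i. 1 \<le> i \<and> i \<le> height g \<longrightarrow> density (At g) (HolS S g i)"
  proof (intro allI impI)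
    fix g i
    have "density (At g) (mixv (vals (leaves g) (S g)))"
      by (rule density_mixv) (simp add: length_vals length_leaves lenS)
    thus "density (At g) (HolS S g i)" unfolding HolS_def by (rule density_H)
  qed
  have C2: "\<forall>g i. 1 \<le> i \<and> i < height g \<longrightarrow>
        op_eq (At g) (HolS S g i) (apply_op (At g) (level_gate Iu (level g i)) (HolS S g (Suc i)))"
    unfolding HolS_def by (auto simp: H_step)
  have key: "\<exists>q. q \<in> set (nodes g 0) \<and> fst q = b \<and>
      op_eq (At b) (ctx (HolS S) g p) (H b (mixv (vals (leaves b) (take (At b) (drop (snd q) (S g))))) 1)"
    if "occ g b p" for g b p
  proof -
    obtain i j where p: "p = (i, j)" by (cases p)
    let ?q = "(b, sum_list (map At (take j (level g i))))"
    have "op_eq (At b) (ctx (HolS S) g p) (H b (mixv (vals (leaves b) (take (At b) (drop (snd ?q) (S g))))) 1)"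
      using ctx_occ[of S g b i j, OF lenS] that p by (simp add: segS_def)
    moreover have "?q \<in> set (nodes g 0)" using occ_node that p by simp
    ultimately show ?thesis by (intro exI[of _ ?q]) simp
  qed
  have C3: "\<forall>g b p q. occ g b p \<and> occ g b q \<longrightarrow> op_eq (At b) (ctx (HolS S) g p) (ctx (HolS S) g q)"
  proof (intro allI impI)
    fix g b p q assume "occ g b p \<and> occ g b q"
    then obtain q1 q2 where q1: "q1 \<in> set (nodes g 0)" "fst q1 = b"
      "op_eq (At b) (ctx (HolS S) g p) (H b (mixv (vals (leaves b) (take (At b) (drop (snd q1) (S g))))) 1)"
      and q2: "q2 \<in> set (nodes g 0)" "fst q2 = b"
      "op_eq (At b) (ctx (HolS S) g q) (H b (mixv (vals (leaves b) (take (At b) (drop (snd q2) (S g))))) 1)"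
      using key by blast
    have "fst q1 = fst q2 \<longrightarrow> sim (leaves (fst q1)) (take (At (fst q1)) (drop (snd q1) (S g))) (take (At (fst q1)) (drop (snd q2) (S g)))"
      using good[of g] q1(1) q2(1) unfolding goodS_def by blast
    hence "sim (leaves b) (take (At b) (drop (snd q1) (S g))) (take (At b) (drop (snd q2) (S g)))"
      using q1(2) q2(2) by simp
    hence "mixv (vals (leaves b) (take (At b) (drop (snd q1) (S g)))) = mixv (vals (leaves b) (take (At b) (drop (snd q2) (S g))))"
      by (rule mixv_sim)
    thus "op_eq (At b) (ctx (HolS S) g p) (ctx (HolS S) g q)"
      using q1(3) q2(3) by (metis op_eq_sym op_eq_trans)
  qed
  have atom1: "op_eq 1 (ctx (HolS S) g p) (mixv (\<lambda>c. [lv b False c]))" if oc: "occ g b p" and at: "b = Fa \<or> b = Tr" for g b p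
  proof -
    obtain q where q: "q \<in> set (nodes g 0)" "fst q = b"
      "op_eq (At b) (ctx (HolS S) g p) (H b (mixv (vals (leaves b) (take (At b) (drop (snd q) (S g))))) 1)"
      using key[OF oc] by blast
    have A1: "At b = 1" and h1: "height b = 1" and lb: "leaves b = [b]" using at by auto
    have "(b, snd q) \<in> set (nodes g 0)" using q(1,2) by (metis prod.collapse)
    hence "snd q + At b \<le> 0 + At g" by (rule nodes_bound[THEN conjunct2])
    hence lt: "snd q < length (S g)" using lenS[of g] A1 by simp
    have s: "take 1 (drop (snd q) (S g)) = [S g ! snd q]"
      using lt by (simp add: Cons_nth_drop_Suc[symmetric])
    have "H b (mixv (vals (leaves b) (take (At b) (drop (snd q) (S g))))) 1 = mixv (vals [b] [S g ! snd q])"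
      using h1 by (simp only: H_top A1 lb s order_refl)
    moreover have "vals [b] [S g ! snd q] = (\<lambda>c. [lv b False c])" using at by (auto simp: lv_def vals_def)
    ultimately show ?thesis using q(3) A1 by simp
  qed
  have C4: "\<forall>g p. occ g Fa p \<longrightarrow> op_eq 1 (ctx (HolS S) g p) (proj0 1 Iu)"
  proof (intro allI impI)
    fix g p assume "occ g Fa p"
    from atom1[OF this] have "op_eq 1 (ctx (HolS S) g p) (mixv (\<lambda>c. [False]))" by (simp add: lv_def)
    thus "op_eq 1 (ctx (HolS S) g p) (proj0 1 Iu)" using proj0_1 by (metis op_eq_sym op_eq_trans)
  qed
  have C5: "\<forall>g p. occ g Tr p \<longrightarrow> op_eq 1 (ctx (HolS S) g p) (proj1 1 Iu)"
  proof (intro allI impI)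
    fix g p assume "occ g Tr p"
    from atom1[OF this] have "op_eq 1 (ctx (HolS S) g p) (mixv (\<lambda>c. [True]))" by (simp add: lv_def)
    thus "op_eq 1 (ctx (HolS S) g p) (proj1 1 Iu)" using proj1_1 by (metis op_eq_sym op_eq_trans)
  qed
  show ?thesis unfolding holistic_model_def using C1 C2 C3 C4 C5 by blast
qed

fun cls :: "form \<Rightarrow> bool" where
  "cls (SqId a) = False"
| "cls (SqNeg a) = False"
| "cls (Neg a) = cls a"
| "cls (Xor a b) = (cls a \<and> cls b)"
| "cls (Tof a b c) = (cls a \<and> cls b \<and> cls c)"
| "cls _ = True"

fun nodef :: "form \<Rightarrow> bool list \<Rightarrow> bool list" where
  "nodef (Neg a) = notf"
| "nodef (Xor a b) = xorf (At a)"
| "nodef (Tof a b c) = toff (At a) (At b)"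
| "nodef _ = id"

fun levf :: "form list \<Rightarrow> bool list \<Rightarrow> bool list" where
  "levf [] y = []"
| "levf (b # l) y = nodef b (take (At b) y) @ levf l (drop (At b) y)"

fun CLd :: "form \<Rightarrow> nat \<Rightarrow> bool list \<Rightarrow> bool list" where
  "CLd g 0 = id"
| "CLd g (Suc d) = levf (level g (height g - Suc d)) \<circ> CLd g d"

lemma cls_expand: "cls b \<Longrightarrow> x \<in> set (expand b) \<Longrightarrow> cls x"
  by (cases b) auto

lemma cls_level: "cls g \<Longrightarrow> x \<in> set (level g i) \<Longrightarrow> cls x"
proof -
  assume g: "cls g"
  have "\<forall>x\<in>set ((next_level ^^ k) [g]). cls x" for k
  proof (induction k)
    case 0 then show ?case using g by simp
  next
    case (Suc k) then show ?case by (auto simp: next_level_def intro: cls_expand)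
  qed
  thus "x \<in> set (level g i) \<Longrightarrow> cls x" by (simp add: level_def)
qed

lemma nodef_len: "cls b \<Longrightarrow> length y = At b \<Longrightarrow> length (nodef b y) = At b"
proof (cases b)
  case (Neg a)
  assume "length y = At b" thus ?thesis using Neg At_pos[of a] by (simp add: notf_def)
next
  case (Xor a c)
  assume "length y = At b" thus ?thesis using Xor At_pos[of a] At_pos[of c] by (simp add: xorf_def)
next
  case (Tof a c d)
  assume "length y = At b" thus ?thesis using Tof At_pos[of a] At_pos[of c] At_pos[of d] by (simp add: toff_def)
qed auto

lemma perm_eqI: "op_eq n G (perm_op f) \<Longrightarrow> op_eq n (conj_gate n Iu G) (perm_op f)"
  using conj_gate_Iu by (metis op_eq_trans)

lemma node_perm: "cls b \<Longrightarrow> op_eq (At b) (node_gate Iu b) (perm_op (nodef b))"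
proof (cases b)
  case (Neg a) then show ?thesis by (simp add: perm_eqI NOT_perm)
next
  case (Xor a c) then show ?thesis by (simp add: perm_eqI XOR_perm)
next
  case (Tof a c d) then show ?thesis by (simp add: perm_eqI TOF_perm)
qed (auto simp: op_eq_def op_id_def perm_op_def)

lemma levf_len: "\<forall>b\<in>set l. cls b \<Longrightarrow> length y = sum_list (map At l) \<Longrightarrow> length (levf l y) = sum_list (map At l)"
  by (induction l arbitrary: y) (auto simp: nodef_len)

lemma lg_perm: "\<forall>b\<in>set l. cls b \<Longrightarrow> op_eq (sum_list (map At l)) (level_gate Iu l) (perm_op (levf l))"
proof (induction l)
  case Nil
  then show ?case by (auto simp: op_eq_def level_gate_Nil op_id_def perm_op_def)
next
  case (Cons b l)
  show ?case unfolding op_eq_def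
  proof (intro ballI)
    fix x y assume x: "x \<in> bits (sum_list (map At (b # l)))" and y: "y \<in> bits (sum_list (map At (b # l)))"
    have cb: "cls b" and cl: "\<forall>b\<in>set l. cls b" using Cons.prems by auto
    have n1: "node_gate Iu b (take (At b) x) (take (At b) y) = perm_op (nodef b) (take (At b) x) (take (At b) y)"
      using node_perm[OF cb] x y unfolding op_eq_def by simp
    have n2: "level_gate Iu l (drop (At b) x) (drop (At b) y) = perm_op (levf l) (drop (At b) x) (drop (At b) y)"
      using Cons.IH[OF cl] x y unfolding op_eq_def by simp
    have ln: "length (nodef b (take (At b) y)) = At b" using nodef_len[OF cb] y by simp
    have eqv: "(take (At b) x = nodef b (take (At b) y) \<and> drop (At b) x = levf l (drop (At b) y))
        = (x = nodef b (take (At b) y) @ levf l (drop (At b) y))"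
    proof -
      let ?A = "nodef b (take (At b) y)" and ?B = "levf l (drop (At b) y)"
      have "(x = ?A @ ?B) = (?A @ ?B = x)" by (rule eq_commute)
      also have "\<dots> = (?A = take (At b) x \<and> ?B = drop (At b) x)"
        using append_eq_conv_conj[of ?A ?B x] ln by simp
      also have "\<dots> = (take (At b) x = ?A \<and> drop (At b) x = ?B)" by (simp only: eq_commute)
      finally show ?thesis by (simp only: eq_commute)
    qed
    have "level_gate Iu (b # l) x y = (if take (At b) x = nodef b (take (At b) y) then 1 else 0) * (if drop (At b) x = levf l (drop (At b) y) then 1 else 0)"
      unfolding level_gate_Cons op_tensor_def n1 n2 perm_op_def by (rule refl)
    also have "\<dots> = (if take (At b) x = nodef b (take (At b) y) \<and> drop (At b) x = levf l (drop (At b) y) then 1 else 0)"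
      by (simp only: if10_mult) simp
    also have "\<dots> = perm_op (levf (b # l)) x y"
      unfolding perm_op_def eqv levf.simps ..
    finally show "level_gate Iu (b # l) x y = perm_op (levf (b # l)) x y" .
  qed
qed

lemma term_eq: "(if x = f w then 1 else 0) * (((if w = a \<and> z = a then 1 else 0) + (if w = b \<and> z = b then 1 else 0)) / 2) * cnj (if y = f z then 1 else 0)
   = ((if z = a then (if w = a then (if x = f w \<and> y = f z then 1 else 0) else 0) else 0) + (if z = b then (if w = b then (if x = f w \<and> y = f z then 1 else 0) else 0) else (0::complex))) / 2"
  by (cases "x = f w"; cases "y = f z"; cases "w = a"; cases "z = a"; cases "w = b"; cases "z = b"; simp)

lemma apply_perm_mix:
  assumes l: "\<And>c. length (us c) = n" and G: "op_eq n G (perm_op f)"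
  shows "op_eq n (apply_op n G (mixv us)) (mixv (\<lambda>c. f (us c)))"
proof -
  have D: "(\<Sum>z\<in>bits n. \<Sum>w\<in>bits n. if z = u then (if w = u then (if x = f w \<and> y = f z then 1 else 0) else 0) else (0::complex))
      = (if x = f u \<and> y = f u then 1 else 0)" if "length u = n" for u x y
  proof -
    have "(\<Sum>z\<in>bits n. \<Sum>w\<in>bits n. if z = u then (if w = u then (if x = f w \<and> y = f z then 1 else 0) else 0) else (0::complex))
        = (\<Sum>z\<in>bits n. if z = u then (\<Sum>w\<in>bits n. if w = u then (if x = f w \<and> y = f z then 1 else 0) else 0) else 0)"
      by (rule sum.cong[OF refl]) simp
    also have "\<dots> = (\<Sum>w\<in>bits n. if w = u then (if x = f w \<and> y = f u then 1 else 0) else 0)"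
      using that by (simp add: sum.delta)
    also have "\<dots> = (if x = f u \<and> y = f u then 1 else 0)" using that by simp
    finally show ?thesis .
  qed
  have "apply_op n (perm_op f) (mixv us) x y = mixv (\<lambda>c. f (us c)) x y" for x y
  proof -
    have "apply_op n (perm_op f) (mixv us) x y
        = (\<Sum>z\<in>bits n. \<Sum>w\<in>bits n. ((if z = us False then (if w = us False then (if x = f w \<and> y = f z then 1 else 0) else 0) else 0)
           + (if z = us True then (if w = us True then (if x = f w \<and> y = f z then 1 else 0) else 0) else 0)) / 2)"
      unfolding apply_op_eq mixv_eq perm_op_def
      by (rule sum.cong[OF refl], rule sum.cong[OF refl], rule term_eq)
    also have "\<dots> = ((\<Sum>z\<in>bits n. \<Sum>w\<in>bits n. (if z = us False then (if w = us False then (if x = f w \<and> y = f z then 1 else 0) else 0) else 0))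
           + (\<Sum>z\<in>bits n. \<Sum>w\<in>bits n. (if z = us True then (if w = us True then (if x = f w \<and> y = f z then 1 else 0) else 0) else 0))) / 2"
      by (simp only: sum_divide_distrib[symmetric] sum.distrib)
    also have "\<dots> = mixv (\<lambda>c. f (us c)) x y"
      by (simp only: D l mixv_eq)
    finally show ?thesis .
  qed
  hence "apply_op n (perm_op f) (mixv us) = mixv (\<lambda>c. f (us c))" by (intro ext)
  thus ?thesis using apply_op_congG[OF G, of "mixv us"] by simp
qed

lemma HH_mix:
  assumes g: "cls g" and l: "\<And>c. length (us c) = At g"
  shows "op_eq (At g) (HH g (mixv us) d) (mixv (\<lambda>c. CLd g d (us c))) \<and> (\<forall>c. length (CLd g d (us c)) = At g)"
proof (induction d)
  case 0 then show ?case using l by simp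
next
  case (Suc d)
  let ?L = "level g (height g - Suc d)"
  have cL: "\<forall>b\<in>set ?L. cls b" using cls_level[OF g] by blast
  have sL: "sum_list (map At ?L) = At g" by (rule At_level)
  have lens: "\<And>c. length (CLd g d (us c)) = At g" using Suc.IH by blast
  have P: "op_eq (At g) (level_gate Iu ?L) (perm_op (levf ?L))" using lg_perm[OF cL] sL by simp
  have "HH g (mixv us) (Suc d) = apply_op (At g) (level_gate Iu ?L) (mixv (\<lambda>c. CLd g d (us c)))"
    using apply_op_cong[OF Suc.IH[THEN conjunct1]] by simp
  moreover have "op_eq (At g) (apply_op (At g) (level_gate Iu ?L) (mixv (\<lambda>c. CLd g d (us c))))
      (mixv (\<lambda>c. levf ?L (CLd g d (us c))))"
    by (rule apply_perm_mix[OF lens P])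
  moreover have "\<forall>c. length (CLd g (Suc d) (us c)) = At g"
    using levf_len[OF cL] lens sL by simp
  ultimately show ?case by simp
qed

lemma prob_cong: "op_eq n \<rho> \<rho>' \<Longrightarrow> prob n U \<rho> = prob n U \<rho>'"
  unfolding prob_def op_trace_def op_mult_def op_eq_def by simp

lemma prob_mix:
  assumes l: "\<And>c. length (ws c) = n"
  shows "prob n Iu (mixv ws) = (\<Sum>c\<in>UNIV. if last (ws c) then 1 else 0) / 2"
proof -
  have P: "proj1 n Iu x z = (if x = z \<and> last x then 1 else 0)" if "x \<in> bits n" "z \<in> bits n" for x z
  proof -
    have "proj1 n Iu x z = (\<Sum>w\<in>{w \<in> bits n. last w}. if x = w then (if z = w then 1 else 0) else 0)"
      unfolding proj1_def using that by (intro sum.cong refl) (auto simp: tp_Iu)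
    also have "\<dots> = (if x \<in> {w \<in> bits n. last w} then (if z = x then 1 else 0) else 0)"
      by (rule sum.delta'[OF finite_subset[OF _ finite_bits[of n]]]) blast
    also have "\<dots> = (if x = z \<and> last x then 1 else 0)" using that by auto
    finally show ?thesis .
  qed
  have "op_trace n (op_mult n (proj1 n Iu) (mixv ws)) = (\<Sum>x\<in>bits n. \<Sum>z\<in>bits n. if z = x then (if last x then mixv ws z x else 0) else 0)"
    unfolding op_trace_def op_mult_def by (intro sum.cong refl) (auto simp: P)
  also have "\<dots> = (\<Sum>x\<in>bits n. if last x then mixv ws x x else 0)" by simp
  also have "\<dots> = (\<Sum>x\<in>bits n. \<Sum>c\<in>UNIV. (if x = ws c then (if last (ws c) then 1 else 0) else 0) / 2)"
    by (rule sum.cong[OF refl]) (auto simp: mixv_eq UNIV_bool)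
  also have "\<dots> = (\<Sum>c\<in>UNIV. \<Sum>x\<in>bits n. (if x = ws c then (if last (ws c) then 1 else 0) else 0) / 2)"
    by (rule sum.swap)
  also have "\<dots> = (\<Sum>c\<in>UNIV. (if last (ws c) then 1 else 0) / 2)"
    using l by (intro sum.cong refl) (simp add: if_distrib[of "\<lambda>t. t / 2"] cong: if_cong)
  finally have T: "op_trace n (op_mult n (proj1 n Iu) (mixv ws)) = (\<Sum>c\<in>UNIV. (if last (ws c) then 1 else 0) / 2)" .
  show ?thesis unfolding prob_def T
    by (cases "last (ws False)"; cases "last (ws True)"; simp add: UNIV_bool)
qed

lemma prob_occ:
  assumes lenS: "\<And>g. length (S g) = At g" and good: "\<And>g. goodS g (S g)"
    and oc: "occ g a (i, j)" and ca: "cls a"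
  shows "prob (At a) Iu (hol_mean (HolS S) g a)
    = (\<Sum>c\<in>UNIV. if last (CLd a (height a - 1) (vals (leaves a) (segS S g (sum_list (map At (take j (level g i)))) (At a)) c)) then 1 else 0) / 2"
proof -
  define o' where "o' = sum_list (map At (take j (level g i)))"
  define M where "M = vals (leaves a) (segS S g o' (At a))"
  have hm: "holistic_model Iu (HolS S)" by (rule hol_model[OF lenS good])
  have some: "occ g a (SOME p. occ g a p)" by (rule someI[of _ "(i, j)"]) (rule oc)
  have norm: "\<forall>g b p q. occ g b p \<and> occ g b q \<longrightarrow> op_eq (At b) (ctx (HolS S) g p) (ctx (HolS S) g q)"
    using hm unfolding holistic_model_def by (elim conjE)
  have N: "op_eq (At a) (hol_mean (HolS S) g a) (ctx (HolS S) g (i, j))"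
    unfolding hol_mean_def using norm some oc by blast
  have C: "op_eq (At a) (ctx (HolS S) g (i, j)) (H a (mixv M) 1)"
    using ctx_occ[of S g a i j, OF lenS oc] unfolding M_def o'_def .
  have "(a, o') \<in> set (nodes g 0)" unfolding o'_def by (rule occ_node[OF oc])
  hence "o' + At a \<le> At g" using nodes_bound[of a o' g 0] by simp
  hence lM: "length (M c) = At a" for c
    using lenS[of g] by (simp add: M_def length_vals segS_def length_leaves)
  have HM: "op_eq (At a) (HH a (mixv M) (height a - 1)) (mixv (\<lambda>c. CLd a (height a - 1) (M c)))"
    and lC: "\<forall>c. length (CLd a (height a - 1) (M c)) = At a"
    using HH_mix[of a M "height a - 1", OF ca lM] by blast+
  have "prob (At a) Iu (hol_mean (HolS S) g a) = prob (At a) Iu (mixv (\<lambda>c. CLd a (height a - 1) (M c)))"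
  proof (rule prob_cong)
    have "op_eq (At a) (hol_mean (HolS S) g a) (H a (mixv M) 1)" by (rule op_eq_trans[OF N C])
    moreover have "H a (mixv M) 1 = HH a (mixv M) (height a - 1)" by (simp add: H_def)
    ultimately show "op_eq (At a) (hol_mean (HolS S) g a) (mixv (\<lambda>c. CLd a (height a - 1) (M c)))"
      using HM by (metis op_eq_trans)
  qed
  also have "\<dots> = (\<Sum>c\<in>UNIV. if last (CLd a (height a - 1) (M c)) then 1 else 0) / 2"
    by (rule prob_mix) (use lC in blast)
  finally show ?thesis unfolding M_def o'_def .
qed

lemma subformula_occ: "occ g a p \<Longrightarrow> subformula a g"
  unfolding subformula_def by blast

lemma not_entails:
  assumes "holistic_model Iu Hol" "subformula a g" "subformula b g"
    "prob (At a) Iu (hol_mean Hol g a) > prob (At b) Iu (hol_mean Hol g b)"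
  shows "\<not> entails a b"
  unfolding entails_def using assms unitary_Iu by (metis not_le)

abbreviation "pp \<equiv> Atom 0"
abbreviation "qq \<equiv> Atom 1"
abbreviation "rr \<equiv> Atom 2"

definition simc :: "form list \<Rightarrow> bool list \<Rightarrow> bool list \<Rightarrow> bool" where
  "simc ls s1 s2 \<longleftrightarrow> length s1 = length ls \<and> length s2 = length ls \<and>
     (list_all (\<lambda>(l, a, b). isAt l \<longrightarrow> a = b) (zip ls (zip s1 s2)) \<or> list_all (\<lambda>(l, a, b). isAt l \<longrightarrow> a \<noteq> b) (zip ls (zip s1 s2)))"

lemma sim_simc: "sim ls s1 s2 = simc ls s1 s2"
  unfolding sim_def simc_def by (auto simp: list_all_length)

definition goodc :: "form \<Rightarrow> bool list \<Rightarrow> bool" where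
  "goodc g s \<longleftrightarrow> list_all (\<lambda>p. list_all (\<lambda>q. fst p = fst q \<longrightarrow>
      simc (leaves (fst p)) (take (At (fst p)) (drop (snd p) s)) (take (At (fst p)) (drop (snd q) s))) (nodes g 0)) (nodes g 0)"

lemma goodS_goodc: "goodS g s = goodc g s"
  unfolding goodS_def goodc_def sim_simc by (simp add: list_all_iff)

lemma goodS_repl: "goodS g (replicate (At g) False)"
  unfolding goodS_def
proof (intro ballI impI)
  fix p q assume p: "p \<in> set (nodes g 0)" and q: "q \<in> set (nodes g 0)" and e: "fst p = fst q"
  have bp: "snd p + At (fst p) \<le> At g" using nodes_bound[of "fst p" "snd p" g 0] p by simp
  have bq: "snd q + At (fst p) \<le> At g" using nodes_bound[of "fst q" "snd q" g 0] q e by simp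
  have "take (At (fst p)) (drop (snd p) (replicate (At g) False)) = replicate (At (fst p)) False" using bp by simp
  moreover have "take (At (fst p)) (drop (snd q) (replicate (At g) False)) = replicate (At (fst p)) False" using bq by simp
  ultimately show "sim (leaves (fst p)) (take (At (fst p)) (drop (snd p) (replicate (At g) False)))
          (take (At (fst p)) (drop (snd q) (replicate (At g) False)))"
    by (simp add: sim_def length_leaves)
qed

definition "G1 = Conj pp pp"
definition "G2 = Xor (Conj pp qq) (Conj qq pp)"
definition "G3 = Xor (Conj pp (Conj qq rr)) (Conj (Conj pp qq) rr)"
definition "G4 = Xor (Conj (Conj pp qq) rr) (Conj pp (Conj qq rr))"
definition "G5 = Xor (Conj pp (Disj qq rr)) (Disj (Conj pp qq) (Conj pp rr))"
definition "G6 = Xor (Disj (Conj pp qq) (Conj pp rr)) (Conj pp (Disj qq rr))"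
definition "G8 = Conj pp (Neg pp)"
definition "G9 = Xor (Xor pp qq) (Xor qq pp)"
definition "G10a = Xor (Xor pp qq) (Disj pp qq)"
definition "G10b = Xor (Xor pp qq) (Disj (Neg pp) (Neg qq))"

definition Ssp :: "form \<Rightarrow> bool list" where
  "Ssp g = (if g = G1 then [False, True, False]
    else if g = G2 then [False, False, False, False, True, False]
    else if g = G3 then replicate 8 False @ [True, False]
    else if g = G4 then replicate 7 False @ [True, False, False]
    else if g = G5 then replicate 6 False @ [True, False, False, True, False, False]
    else if g = G6 then replicate 8 False @ [True, True, False, False]
    else if g = G8 then [False, True, False]
    else if g = G9 then [False, True, False, False]
    else if g = G10a then [False, True, False, False, False]
    else if g = G10b then [False, True, False, False, False]
    else replicate (At g) False)"

lemma lenS: "length (Ssp g) = At g"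
  unfolding Ssp_def by (simp add: G1_def G2_def G3_def G4_def G5_def G6_def G8_def G9_def G10a_def G10b_def Conj_def Disj_def)

lemma goodSsp: "goodS g (Ssp g)"
proof -
  have sp: "goodS g (Ssp g)" if "g \<in> {G1, G2, G3, G4, G5, G6, G8, G9, G10a, G10b}"
    using that unfolding goodS_goodc by (elim insertE emptyE; simp only:; code_simp)
  show ?thesis
  proof (cases "g \<in> {G1, G2, G3, G4, G5, G6, G8, G9, G10a, G10b}")
    case True then show ?thesis by (rule sp)
  next
    case False
    hence "Ssp g = replicate (At g) False" unfolding Ssp_def by auto
    then show ?thesis using goodS_repl by simp
  qed
qed

lemma HM: "holistic_model Iu (HolS Ssp)" by (rule hol_model[OF lenS goodSsp])

definition EV :: "form \<Rightarrow> form \<Rightarrow> nat \<Rightarrow> nat \<Rightarrow> bool \<Rightarrow> bool" where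
  "EV g a i j c = last (CLd a (height a - 1) (vals (leaves a) (take (At a) (drop (sum_list (map At (take j (level g i)))) (Ssp g))) c))"

lemma prob_val: "occ g a (i, j) \<Longrightarrow> cls a \<Longrightarrow>
  prob (At a) Iu (hol_mean (HolS Ssp) g a) = ((if EV g a i j False then 1 else 0) + (if EV g a i j True then 1 else 0)) / 2"
  using prob_occ[of Ssp g a i j, OF lenS goodSsp] by (simp add: segS_def EV_def UNIV_bool)

lemma ne:
  assumes "occ g a (i, j)" "cls a" "occ g b (i', j')" "cls b"
   "((if EV g b i' j' False then 1 else 0) + (if EV g b i' j' True then 1 else 0)) / 2
    < ((if EV g a i j False then 1 else 0) + (if EV g a i j True then 1 else (0::real))) / 2"
  shows "\<not> entails a b"
  by (rule not_entails[OF HM subformula_occ[OF assms(1)] subformula_occ[OF assms(3)]])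
     (simp only: prob_val[OF assms(1,2)] prob_val[OF assms(3,4)] assms(5))

lemma item1: "\<not> entails pp (Conj pp pp)"
proof (rule ne[of G1 _ 2 0 _ 1 0])
  show "occ G1 pp (2, 0)" by code_simp
  show "occ G1 (Conj pp pp) (1, 0)" by code_simp
  have "EV G1 pp 2 0 False = False" "EV G1 pp 2 0 True = True" by code_simp+
  moreover have "EV G1 (Conj pp pp) 1 0 False = False" "EV G1 (Conj pp pp) 1 0 True = False" by code_simp+
  ultimately show "((if EV G1 (Conj pp pp) 1 0 False then 1 else 0) + (if EV G1 (Conj pp pp) 1 0 True then 1 else 0)) / 2
    < ((if EV G1 pp 2 0 False then 1 else 0) + (if EV G1 pp 2 0 True then 1 else (0::real))) / 2" by simp
qed (simp_all add: Conj_def)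

lemma item2: "\<not> entails (Conj pp qq) (Conj qq pp)"
proof (rule ne[of G2 _ 2 0 _ 2 1])
  show "occ G2 (Conj pp qq) (2, 0)" by code_simp
  show "occ G2 (Conj qq pp) (2, 1)" by code_simp
  have "EV G2 (Conj pp qq) 2 0 False = False" "EV G2 (Conj pp qq) 2 0 True = True" by code_simp+
  moreover have "EV G2 (Conj qq pp) 2 1 False = False" "EV G2 (Conj qq pp) 2 1 True = False" by code_simp+
  ultimately show "((if EV G2 (Conj qq pp) 2 1 False then 1 else 0) + (if EV G2 (Conj qq pp) 2 1 True then 1 else 0)) / 2
    < ((if EV G2 (Conj pp qq) 2 0 False then 1 else 0) + (if EV G2 (Conj pp qq) 2 0 True then 1 else (0::real))) / 2" by simp
qed (simp_all add: Conj_def Disj_def)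

lemma item3: "\<not> entails (Conj pp (Conj qq rr)) (Conj (Conj pp qq) rr)"
proof (rule ne[of G3 _ 2 0 _ 2 1])
  show "occ G3 (Conj pp (Conj qq rr)) (2, 0)" by code_simp
  show "occ G3 (Conj (Conj pp qq) rr) (2, 1)" by code_simp
  have "EV G3 (Conj pp (Conj qq rr)) 2 0 False = False" "EV G3 (Conj pp (Conj qq rr)) 2 0 True = True" by code_simp+
  moreover have "EV G3 (Conj (Conj pp qq) rr) 2 1 False = False" "EV G3 (Conj (Conj pp qq) rr) 2 1 True = False" by code_simp+
  ultimately show "((if EV G3 (Conj (Conj pp qq) rr) 2 1 False then 1 else 0) + (if EV G3 (Conj (Conj pp qq) rr) 2 1 True then 1 else 0)) / 2
    < ((if EV G3 (Conj pp (Conj qq rr)) 2 0 False then 1 else 0) + (if EV G3 (Conj pp (Conj qq rr)) 2 0 True then 1 else (0::real))) / 2" by simp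
qed (simp_all add: Conj_def Disj_def)

lemma item4: "\<not> entails (Conj (Conj pp qq) rr) (Conj pp (Conj qq rr))"
proof (rule ne[of G4 _ 2 0 _ 2 1])
  show "occ G4 (Conj (Conj pp qq) rr) (2, 0)" by code_simp
  show "occ G4 (Conj pp (Conj qq rr)) (2, 1)" by code_simp
  have "EV G4 (Conj (Conj pp qq) rr) 2 0 False = False" "EV G4 (Conj (Conj pp qq) rr) 2 0 True = True" by code_simp+
  moreover have "EV G4 (Conj pp (Conj qq rr)) 2 1 False = False" "EV G4 (Conj pp (Conj qq rr)) 2 1 True = False" by code_simp+
  ultimately show "((if EV G4 (Conj pp (Conj qq rr)) 2 1 False then 1 else 0) + (if EV G4 (Conj pp (Conj qq rr)) 2 1 True then 1 else 0)) / 2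
    < ((if EV G4 (Conj (Conj pp qq) rr) 2 0 False then 1 else 0) + (if EV G4 (Conj (Conj pp qq) rr) 2 0 True then 1 else (0::real))) / 2" by simp
qed (simp_all add: Conj_def Disj_def)

lemma item5: "\<not> entails (Conj pp (Disj qq rr)) (Disj (Conj pp qq) (Conj pp rr))"
proof (rule ne[of G5 _ 2 0 _ 2 1])
  show "occ G5 (Conj pp (Disj qq rr)) (2, 0)" by code_simp
  show "occ G5 (Disj (Conj pp qq) (Conj pp rr)) (2, 1)" by code_simp
  have "EV G5 (Conj pp (Disj qq rr)) 2 0 False = False" "EV G5 (Conj pp (Disj qq rr)) 2 0 True = True" by code_simp+
  moreover have "EV G5 (Disj (Conj pp qq) (Conj pp rr)) 2 1 False = False" "EV G5 (Disj (Conj pp qq) (Conj pp rr)) 2 1 True = False" by code_simp+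
  ultimately show "((if EV G5 (Disj (Conj pp qq) (Conj pp rr)) 2 1 False then 1 else 0) + (if EV G5 (Disj (Conj pp qq) (Conj pp rr)) 2 1 True then 1 else 0)) / 2
    < ((if EV G5 (Conj pp (Disj qq rr)) 2 0 False then 1 else 0) + (if EV G5 (Conj pp (Disj qq rr)) 2 0 True then 1 else (0::real))) / 2" by simp
qed (simp_all add: Conj_def Disj_def)

lemma item6: "\<not> entails (Disj (Conj pp qq) (Conj pp rr)) (Conj pp (Disj qq rr))"
proof (rule ne[of G6 _ 2 0 _ 2 1])
  show "occ G6 (Disj (Conj pp qq) (Conj pp rr)) (2, 0)" by code_simp
  show "occ G6 (Conj pp (Disj qq rr)) (2, 1)" by code_simp
  have "EV G6 (Disj (Conj pp qq) (Conj pp rr)) 2 0 False = False" "EV G6 (Disj (Conj pp qq) (Conj pp rr)) 2 0 True = True" by code_simp+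
  moreover have "EV G6 (Conj pp (Disj qq rr)) 2 1 False = False" "EV G6 (Conj pp (Disj qq rr)) 2 1 True = False" by code_simp+
  ultimately show "((if EV G6 (Conj pp (Disj qq rr)) 2 1 False then 1 else 0) + (if EV G6 (Conj pp (Disj qq rr)) 2 1 True then 1 else 0)) / 2
    < ((if EV G6 (Disj (Conj pp qq) (Conj pp rr)) 2 0 False then 1 else 0) + (if EV G6 (Disj (Conj pp qq) (Conj pp rr)) 2 0 True then 1 else (0::real))) / 2" by simp
qed (simp_all add: Conj_def Disj_def)

lemma item8: "\<not> entails (Conj pp (Neg pp)) Fa"
proof (rule ne[of G8 _ 1 0 _ 2 2])
  show "occ G8 (Conj pp (Neg pp)) (1, 0)" by code_simp
  show "occ G8 (Fa) (2, 2)" by code_simp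
  have "EV G8 (Conj pp (Neg pp)) 1 0 False = False" "EV G8 (Conj pp (Neg pp)) 1 0 True = True" by code_simp+
  moreover have "EV G8 (Fa) 2 2 False = False" "EV G8 (Fa) 2 2 True = False" by code_simp+
  ultimately show "((if EV G8 (Fa) 2 2 False then 1 else 0) + (if EV G8 (Fa) 2 2 True then 1 else 0)) / 2
    < ((if EV G8 (Conj pp (Neg pp)) 1 0 False then 1 else 0) + (if EV G8 (Conj pp (Neg pp)) 1 0 True then 1 else (0::real))) / 2" by simp
qed (simp_all add: Conj_def Disj_def)

lemma item9: "\<not> entails (Xor pp qq) (Xor qq pp)"
proof (rule ne[of G9 _ 2 0 _ 2 1])
  show "occ G9 (Xor pp qq) (2, 0)" by code_simp
  show "occ G9 (Xor qq pp) (2, 1)" by code_simp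
  have "EV G9 (Xor pp qq) 2 0 False = True" "EV G9 (Xor pp qq) 2 0 True = True" by code_simp+
  moreover have "EV G9 (Xor qq pp) 2 1 False = False" "EV G9 (Xor qq pp) 2 1 True = False" by code_simp+
  ultimately show "((if EV G9 (Xor qq pp) 2 1 False then 1 else 0) + (if EV G9 (Xor qq pp) 2 1 True then 1 else 0)) / 2
    < ((if EV G9 (Xor pp qq) 2 0 False then 1 else 0) + (if EV G9 (Xor pp qq) 2 0 True then 1 else (0::real))) / 2" by simp
qed (simp_all add: Conj_def Disj_def)

lemma item10a: "\<not> entails (Xor pp qq) (Disj pp qq)"
proof (rule ne[of G10a _ 2 0 _ 2 1])
  show "occ G10a (Xor pp qq) (2, 0)" by code_simp
  show "occ G10a (Disj pp qq) (2, 1)" by code_simp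
  have "EV G10a (Xor pp qq) 2 0 False = True" "EV G10a (Xor pp qq) 2 0 True = True" by code_simp+
  moreover have "EV G10a (Disj pp qq) 2 1 False = False" "EV G10a (Disj pp qq) 2 1 True = True" by code_simp+
  ultimately show "((if EV G10a (Disj pp qq) 2 1 False then 1 else 0) + (if EV G10a (Disj pp qq) 2 1 True then 1 else 0)) / 2
    < ((if EV G10a (Xor pp qq) 2 0 False then 1 else 0) + (if EV G10a (Xor pp qq) 2 0 True then 1 else (0::real))) / 2" by simp
qed (simp_all add: Conj_def Disj_def)

lemma item10b: "\<not> entails (Xor pp qq) (Disj (Neg pp) (Neg qq))"
proof (rule ne[of G10b _ 2 0 _ 2 1])
  show "occ G10b (Xor pp qq) (2, 0)" by code_simp
  show "occ G10b (Disj (Neg pp) (Neg qq)) (2, 1)" by code_simp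
  have "EV G10b (Xor pp qq) 2 0 False = True" "EV G10b (Xor pp qq) 2 0 True = True" by code_simp+
  moreover have "EV G10b (Disj (Neg pp) (Neg qq)) 2 1 False = True" "EV G10b (Disj (Neg pp) (Neg qq)) 2 1 True = False" by code_simp+
  ultimately show "((if EV G10b (Disj (Neg pp) (Neg qq)) 2 1 False then 1 else 0) + (if EV G10b (Disj (Neg pp) (Neg qq)) 2 1 True then 1 else 0)) / 2
    < ((if EV G10b (Xor pp qq) 2 0 False then 1 else 0) + (if EV G10b (Xor pp qq) 2 0 True then 1 else (0::real))) / 2" by simp
qed (simp_all add: Conj_def Disj_def)

lemma entails_refl: "entails a a" by (simp add: entails_def)

theorem theorem5p2:
  shows "(\<exists>\<alpha>. \<not> entails \<alpha> (Conj \<alpha> \<alpha>)) \<and>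
    (\<exists>\<alpha> \<beta>. \<not> entails (Conj \<alpha> \<beta>) (Conj \<beta> \<alpha>)) \<and>
    (\<exists>\<alpha> \<beta> \<delta>. \<not> entails (Conj \<alpha> (Conj \<beta> \<delta>)) (Conj (Conj \<alpha> \<beta>) \<delta>)) \<and>
    (\<exists>\<alpha> \<beta> \<delta>. \<not> entails (Conj (Conj \<alpha> \<beta>) \<delta>) (Conj \<alpha> (Conj \<beta> \<delta>))) \<and>
    (\<exists>\<alpha> \<beta> \<delta>. \<not> entails (Conj \<alpha> (Disj \<beta> \<delta>)) (Disj (Conj \<alpha> \<beta>) (Conj \<alpha> \<delta>))) \<and>
    (\<exists>\<alpha> \<beta> \<delta>. \<not> entails (Disj (Conj \<alpha> \<beta>) (Conj \<alpha> \<delta>)) (Conj \<alpha> (Disj \<beta> \<delta>))) \<and>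
    \<not> (\<forall>\<alpha> \<beta> \<delta>. entails \<delta> \<alpha> \<and> entails \<delta> \<beta> \<longrightarrow> entails \<delta> (Conj \<alpha> \<beta>)) \<and>
    (\<exists>\<alpha> \<beta>. \<not> entails (Conj \<alpha> (Neg \<alpha>)) \<beta>) \<and>
    (\<exists>\<alpha> \<beta>. \<not> entails (Xor \<alpha> \<beta>) (Xor \<beta> \<alpha>)) \<and>
    (\<exists>\<alpha> \<beta>. \<not> entails (Xor \<alpha> \<beta>) (Disj \<alpha> \<beta>) \<and> \<not> entails (Xor \<alpha> \<beta>) (Disj (Neg \<alpha>) (Neg \<beta>)))"
  using item1 item2 item3 item4 item5 item6 item8 item9 item10a item10b entails_refl[of pp] by blast

end
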